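(* Let $E$ be a closed set in $\mathbb{C}$. (1) $E$ satisfies condition $(U)_{1,\alpha}$ for some $\alpha>1$ if and only if there exist positive constants $A,C,r_0,\gamma$ and an increasing function $g_{1,\gamma}:(0,+\infty)\to(0,+\infty)$ with $g_{1,\gamma}(t)=\left(\log\frac{1}{Ct}\right)^{-\gamma}$ for $t\in(0,2r_0)$, such that $$\Lambda_{g_{1,\gamma}}\big(E\cap\overline{B}(a,r)\big)\ge A\,g_{1,\gamma}(2r)\quad\text{for every }a\in E,\ r\in(0,r_0).$$ (2) $E$ satisfies condition $(U)_{2,\beta}$ for some $\beta>0$ if and only if there exist positive constants $A,r_0,\eta$ and an increasing function $g_{2,\eta}:(0,+\infty)\to(0,+\infty)$ with $g_{2,\eta}(t)=\exp\!\left(-\eta\,\dfrac{\log(2/t)}{\log\log(4/t)}\right)$ for $t\in(0,2r_0)$, such that $$\Lambda_{g_{2,\eta}}\big(E\cap\overline{B}(a,r)\big)\ge A\,g_{2,\eta}(2r)\quad\text{for every }a\in E,\ r\in(0,r_0).$$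
   Context: For an increasing function $g:(0,\infty)\to(0,\infty)$ with $\lim_{t\to0}g(t)=0$ and a set $F\subset\mathbb{C}$, the $g$-Hausdorff content is $\Lambda_g(F)=\inf\{\sum_k g(\operatorname{diam}B_k)\}$, the infimum over all countable coverings $\{B_k\}$ of $F$ by closed discs. $\overline{B}(a,r)$ is the closed disc of center $a$ and radius $r$. For an increasing function $h$ on $[0,r_0)$ with $h(r)\le r$, a closed set $K\subset\mathbb{C}$ is $h$-uniformly perfect if $\{z\in\mathbb{C}: h(r)\le|z-a|\le r\}\cap K\neq\emptyset$ for every $a\in K$ and every $r\in(0,r_0)$. Let $h_{1,\alpha}(r)=r^\alpha$ ($\alpha>1$) and $h_{2,\beta}(r)=r(\log\frac1r)^{-\beta}$ ($\beta>0$). A closed set satisfies condition $(U)_{1,\alpha}$ (resp. $(U)_{2,\beta}$) if there exist constants $C>0$ and $r_0>0$ such that it is $Ch_{1,\alpha}$-uniformly perfect (resp. $Ch_{2,\beta}$-uniformly perfect) with that $r_0$. *)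

theory Defs
  imports "HOL-Analysis.Analysis"
begin

definition hausdorff_content :: "(real \<Rightarrow> real) \<Rightarrow> complex set \<Rightarrow> ennreal" where
  "hausdorff_content g F =
     (INF cr \<in> {(c :: nat \<Rightarrow> complex, \<rho> :: nat \<Rightarrow> real).
                  (\<forall>k. \<rho> k > 0) \<and> F \<subseteq> (\<Union>k. cball (c k) (\<rho> k))}.
        (\<Sum>k. ennreal (g (diameter (cball (fst cr k) (snd cr k))))))"

definition h_uniformly_perfect :: "(real \<Rightarrow> real) \<Rightarrow> real \<Rightarrow> complex set \<Rightarrow> bool" where
  "h_uniformly_perfect h r0 K \<longleftrightarrow>
     closed K \<and> mono_on {0..<r0} h \<and> (\<forall>r\<in>{0..<r0}. h r \<le> r) \<and>
     (\<forall>a\<in>K. \<forall>r\<in>{0<..<r0}. {z. h r \<le> cmod (z - a) \<and> cmod (z - a) \<le> r} \<inter> K \<noteq> {})"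

definition h1 :: "real \<Rightarrow> real \<Rightarrow> real" where
  "h1 \<alpha> r = r powr \<alpha>"

definition h2 :: "real \<Rightarrow> real \<Rightarrow> real" where
  "h2 \<beta> r = r * (ln (1 / r)) powr (- \<beta>)"

definition condU1 :: "real \<Rightarrow> complex set \<Rightarrow> bool" where
  "condU1 \<alpha> K \<longleftrightarrow> (\<exists>C>0. \<exists>r0>0. h_uniformly_perfect (\<lambda>r. C * h1 \<alpha> r) r0 K)"

definition condU2 :: "real \<Rightarrow> complex set \<Rightarrow> bool" where
  "condU2 \<beta> K \<longleftrightarrow> (\<exists>C>0. \<exists>r0>0. h_uniformly_perfect (\<lambda>r. C * h2 \<beta> r) r0 K)"

definition gauge_fun :: "(real \<Rightarrow> real) \<Rightarrow> bool" where
  "gauge_fun g \<longleftrightarrow> mono_on {0<..} g \<and> (\<forall>t>0. g t > 0) \<and> (g \<longlongrightarrow> 0) (at_right 0)"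

end

theory Submission
  imports Defs "HOL-Real_Asymp.Real_Asymp"
begin

lemma tree_step_geom:
  fixes a y z1 z2 p :: complex
  assumes "cmod (y - a) \<ge> H" "z1 \<in> cball a (H/3)" "z2 \<in> cball y (H/3)"
    "z1 \<in> cball p \<rho>" "z2 \<in> cball p \<rho>"
  shows "\<rho> \<ge> H/6"
proof -
  have t1: "dist a y \<le> dist a z1 + dist z1 y" by (rule dist_triangle)
  have t2: "dist z1 y \<le> dist z1 p + dist p y" by (rule dist_triangle)
  have t3: "dist p y \<le> dist p z2 + dist z2 y" by (rule dist_triangle)
  have d1: "dist a z1 \<le> H/3" using assms(2) by simp
  have d2: "dist z1 p \<le> \<rho>" using assms(4) by (simp add: dist_commute)
  have d3: "dist p z2 \<le> \<rho>" using assms(5) by simp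
  have d4: "dist z2 y \<le> H/3" using assms(3) by (simp add: dist_commute)
  have "dist a y = cmod (y - a)" by (simp add: dist_complex_def norm_minus_commute)
  then show ?thesis using assms(1) t1 t2 t3 d1 d2 d3 d4 by linarith
qed

lemma tree_bound:
  fixes E :: "complex set" and h w :: "real \<Rightarrow> real"
  assumes perf: "\<And>a s. a\<in>E \<Longrightarrow> 0 < s \<Longrightarrow> s < R \<Longrightarrow> \<exists>z\<in>E. h s \<le> cmod (z - a) \<and> cmod (z - a) \<le> s"
    and hpos: "\<And>s. 0 < s \<Longrightarrow> s < R \<Longrightarrow> 0 < h s \<and> h s \<le> s"
    and wmono: "\<And>x y. 0 < x \<Longrightarrow> x \<le> y \<Longrightarrow> w x \<le> w y" and wpos: "\<And>t. t > 0 \<Longrightarrow> 0 < w t"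
    and c3: "\<And>r. 0 < r \<Longrightarrow> r < R \<Longrightarrow> c * w r \<le> w (h (r/2) / 6)"
    and c4: "\<And>r. 0 < r \<Longrightarrow> r < R \<Longrightarrow> w r \<le> 2 * w (h (r/2) / 3)"
    and cpos: "c \<ge> 0"
    and rho0: "\<rho>0 > 0"
  shows "a \<in> E \<Longrightarrow> 0 < r \<Longrightarrow> r < R \<Longrightarrow> r < 2^n * \<rho>0 \<Longrightarrow> finite F \<Longrightarrow> (\<forall>p\<in>F. snd p \<ge> \<rho>0) \<Longrightarrow>
            E \<inter> cball a r \<subseteq> (\<Union>p\<in>F. cball (fst p) (snd p)) \<Longrightarrow> c * w r \<le> (\<Sum>p\<in>F. w (snd p))"
proof (induction n arbitrary: a r F)
  case 0
  have "a \<in> E \<inter> cball a r" using "0.prems"(1,2) by simp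
  then obtain p where p: "p \<in> F" "a \<in> cball (fst p) (snd p)" using "0.prems"(7) by blast
  have hr: "0 < h (r/2)" "h (r/2) \<le> r/2" using hpos[of "r/2"] "0.prems"(2,3) by auto
  have "c * w r \<le> w (h (r/2) / 6)" using c3 "0.prems"(2,3) by blast
  also have "\<dots> \<le> w (snd p)"
  proof (rule wmono)
    show "0 < h (r/2) / 6" using hr by simp
    have "snd p \<ge> \<rho>0" using p(1) "0.prems"(6) by blast
    then show "h (r/2) / 6 \<le> snd p" using hr "0.prems"(4) by simp
  qed
  also have "\<dots> \<le> (\<Sum>p\<in>F. w (snd p))"
  proof (rule member_le_sum)
    show "p \<in> F" by fact
    show "finite F" using "0.prems"(5) .
    fix x assume "x \<in> F - {p}"
    then have "snd x \<ge> \<rho>0" using "0.prems"(6) by blast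
    then have "snd x > 0" using rho0 by linarith
    then show "0 \<le> w (snd x)" using wpos less_imp_le by blast
  qed
  finally show ?case .
next
  case (Suc n)
  note pr = Suc.prems
  have hr: "0 < h (r/2)" "h (r/2) \<le> r/2" using hpos[of "r/2"] pr(2,3) by auto
  define H where "H = h (r/2)"
  obtain y where y: "y \<in> E" "H \<le> cmod (y - a)" "cmod (y - a) \<le> r/2"
    using perf[of a "r/2"] pr(1,2,3) unfolding H_def by auto
  have wnn: "\<And>p. p \<in> F \<Longrightarrow> 0 \<le> w (snd p)"
  proof -
    fix p assume "p \<in> F"
    then have "snd p \<ge> \<rho>0" using pr(6) by blast
    then have "snd p > 0" using rho0 by linarith
    then show "0 \<le> w (snd p)" using wpos less_imp_le by blast
  qed
  have finF: "finite F" using pr(5) .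
  show ?case
  proof (cases "\<exists>p\<in>F. cball (fst p) (snd p) \<inter> cball a (H/3) \<noteq> {} \<and> cball (fst p) (snd p) \<inter> cball y (H/3) \<noteq> {}")
    case True
    then obtain p z1 z2 where p: "p \<in> F" "z1 \<in> cball a (H/3)" "z2 \<in> cball y (H/3)"
      "z1 \<in> cball (fst p) (snd p)" "z2 \<in> cball (fst p) (snd p)" by blast
    have sp: "snd p \<ge> H/6" using tree_step_geom[OF y(2) p(2,3,4,5)] .
    have "c * w r \<le> w (H / 6)" using c3 pr(2,3) H_def by blast
    also have "\<dots> \<le> w (snd p)"
      using hr sp unfolding H_def by (intro wmono) auto
    also have "\<dots> \<le> (\<Sum>p\<in>F. w (snd p))"
      using finF p(1) wnn by (intro member_le_sum) auto
    finally show ?thesis .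
  next
    case False
    define F1 where "F1 = {p\<in>F. cball (fst p) (snd p) \<inter> cball a (H/3) \<noteq> {}}"
    define F2 where "F2 = {p\<in>F. cball (fst p) (snd p) \<inter> cball y (H/3) \<noteq> {}}"
    have disj: "F1 \<inter> F2 = {}" using False unfolding F1_def F2_def by blast
    have sub1: "F1 \<subseteq> F" unfolding F1_def by blast
    have sub2: "F2 \<subseteq> F" unfolding F2_def by blast
    have rr: "0 < H/3" "H/3 < R" "H/3 < 2^n * \<rho>0" using hr pr(2,3,4) unfolding H_def by auto
    have ca: "cball a (H/3) \<subseteq> cball a r" using hr unfolding H_def by (intro subset_cball) simp
    have cy: "cball y (H/3) \<subseteq> cball a r"
    proof
      fix z assume "z \<in> cball y (H/3)"
      then have "dist a z \<le> dist a y + dist y z" "dist y z \<le> H/3" by (auto intro: dist_triangle)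
      moreover have "dist a y \<le> r/2" using y by (simp add: dist_complex_def norm_minus_commute)
      ultimately show "z \<in> cball a r" using hr unfolding H_def by auto
    qed
    have cov1: "E \<inter> cball a (H/3) \<subseteq> (\<Union>p\<in>F1. cball (fst p) (snd p))"
    proof
      fix z assume z: "z \<in> E \<inter> cball a (H/3)"
      then have "z \<in> E \<inter> cball a r" using ca by blast
      then obtain p where "p \<in> F" "z \<in> cball (fst p) (snd p)" using pr(7) by blast
      then have "p \<in> F1" using z unfolding F1_def by blast
      then show "z \<in> (\<Union>p\<in>F1. cball (fst p) (snd p))" using \<open>z \<in> cball (fst p) (snd p)\<close> by blast
    qed
    have cov2: "E \<inter> cball y (H/3) \<subseteq> (\<Union>p\<in>F2. cball (fst p) (snd p))"
    proof
      fix z assume z: "z \<in> E \<inter> cball y (H/3)"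
      then have "z \<in> E \<inter> cball a r" using cy by blast
      then obtain p where "p \<in> F" "z \<in> cball (fst p) (snd p)" using pr(7) by blast
      then have "p \<in> F2" using z unfolding F2_def by blast
      then show "z \<in> (\<Union>p\<in>F2. cball (fst p) (snd p))" using \<open>z \<in> cball (fst p) (snd p)\<close> by blast
    qed
    have f1: "finite F1" using finF sub1 by (rule finite_subset[rotated])
    have f2: "finite F2" using finF sub2 by (rule finite_subset[rotated])
    have b1: "\<forall>p\<in>F1. snd p \<ge> \<rho>0" using pr(6) sub1 by blast
    have b2: "\<forall>p\<in>F2. snd p \<ge> \<rho>0" using pr(6) sub2 by blast
    have i1: "c * w (H/3) \<le> (\<Sum>p\<in>F1. w (snd p))"
      using Suc.IH[OF pr(1) rr f1 b1 cov1] .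
    have i2: "c * w (H/3) \<le> (\<Sum>p\<in>F2. w (snd p))"
      using Suc.IH[OF y(1) rr f2 b2 cov2] .
    have "w r \<le> 2 * w (H/3)" using c4 pr(2,3) unfolding H_def by blast
    then have "c * w r \<le> c * (2 * w (H/3))" using cpos by (rule mult_left_mono)
    also have "\<dots> \<le> (\<Sum>p\<in>F1. w (snd p)) + (\<Sum>p\<in>F2. w (snd p))" using i1 i2 by linarith
    also have "\<dots> = (\<Sum>p\<in>F1 \<union> F2. w (snd p))"
      using disj f1 f2 by (intro sum.union_disjoint[symmetric])
    also have "\<dots> \<le> (\<Sum>p\<in>F. w (snd p))"
      using finF sub1 sub2 wnn by (intro sum_mono2) auto
    finally show ?thesis .
  qed
qed

lemma forward:
  fixes E :: "complex set" and g h :: "real \<Rightarrow> real"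
  assumes closedE: "closed E"
    and perf: "\<And>a s. a\<in>E \<Longrightarrow> 0 < s \<Longrightarrow> s < R \<Longrightarrow> \<exists>z\<in>E. h s \<le> cmod (z - a) \<and> cmod (z - a) \<le> s"
    and hpos: "\<And>s. 0 < s \<Longrightarrow> s < R \<Longrightarrow> 0 < h s \<and> h s \<le> s"
    and gmono: "\<And>x y. 0 < x \<Longrightarrow> x \<le> y \<Longrightarrow> g x \<le> g y" and gpos: "\<And>t. t > 0 \<Longrightarrow> 0 < g t"
    and c3: "\<And>r. 0 < r \<Longrightarrow> r < R \<Longrightarrow> c * g (2*r) \<le> g (2 * (h (r/2) / 6))"
    and c4: "\<And>r. 0 < r \<Longrightarrow> r < R \<Longrightarrow> g (2*r) \<le> 2 * g (2 * (h (r/2) / 3))"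
    and dbl: "\<And>\<rho>. 0 < \<rho> \<Longrightarrow> \<rho> < R \<Longrightarrow> g (2 * (2 * \<rho>)) \<le> M * g (2 * \<rho>)"
    and cpos: "c > 0" and c1: "c \<le> 1" and M1: "M \<ge> 1"
    and a: "a \<in> E" and r: "0 < r" "r < R"
  shows "ennreal (c / M * g (2*r)) \<le> hausdorff_content g (E \<inter> cball a r)"
  unfolding hausdorff_content_def
proof (rule INF_greatest)
  fix cr assume "cr \<in> {(c :: nat \<Rightarrow> complex, \<rho> :: nat \<Rightarrow> real).
                  (\<forall>k. \<rho> k > 0) \<and> E \<inter> cball a r \<subseteq> (\<Union>k. cball (c k) (\<rho> k))}"
  obtain cc \<rho> where cr: "cr = (cc, \<rho>)" by (cases cr)
  have crin: "(\<forall>k. \<rho> k > 0) \<and> E \<inter> cball a r \<subseteq> (\<Union>k. cball (cc k) (\<rho> k))"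
    using \<open>cr \<in> _\<close> unfolding cr mem_Collect_eq prod.case by blast
  have \<rho>pos: "\<And>k. \<rho> k > 0" using crin by blast
  have cov: "E \<inter> cball a r \<subseteq> (\<Union>k. cball (cc k) (\<rho> k))" using crin by blast
  have diam: "\<And>k. diameter (cball (cc k) (\<rho> k)) = 2 * \<rho> k"
  proof -
    fix k show "diameter (cball (cc k) (\<rho> k)) = 2 * \<rho> k" using \<rho>pos[of k] by (simp add: diameter_cball)
  qed
  have sumeq: "(\<Sum>k. ennreal (g (diameter (cball (fst cr k) (snd cr k))))) = (\<Sum>k. ennreal (g (2 * \<rho> k)))"
    using cr diam by simp
  have cM: "c / M \<le> 1" using cpos c1 M1 by (simp add: divide_le_eq)
  have cM0: "c / M > 0" using cpos M1 by simp
  have g2r: "g (2*r) > 0" using gpos r by simp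
  have main: "ennreal (c / M * g (2*r)) \<le> (\<Sum>k. ennreal (g (2 * \<rho> k)))"
  proof (cases "\<exists>k. r \<le> \<rho> k")
    case True
    then obtain k where k: "r \<le> \<rho> k" by blast
    have "c / M * g (2*r) \<le> 1 * g (2*r)" using cM g2r by (intro mult_right_mono) auto
    also have "\<dots> \<le> g (2 * \<rho> k)" using gmono[of "2*r" "2*\<rho> k"] r k by simp
    finally have "ennreal (c / M * g (2*r)) \<le> ennreal (g (2 * \<rho> k))" by (rule ennreal_leI)
    also have "\<dots> = (\<Sum>i\<in>{k}. ennreal (g (2 * \<rho> i)))" by simp
    also have "\<dots> \<le> (\<Sum>i. ennreal (g (2 * \<rho> i)))" by (rule sum_le_suminf) auto
    finally show ?thesis .
  next
    case False
    then have small: "\<And>k. \<rho> k < r" by (meson not_le)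
    define S where "S = E \<inter> cball a r"
    have cS: "compact S" unfolding S_def using closedE by (intro closed_Int_compact) auto
    have cov': "S \<subseteq> \<Union> ((\<lambda>k. ball (cc k) (2 * \<rho> k)) ` UNIV)"
    proof
      fix x assume "x \<in> S"
      then obtain k where "x \<in> cball (cc k) (\<rho> k)" using cov unfolding S_def by blast
      then have "x \<in> ball (cc k) (2 * \<rho> k)" using \<rho>pos[of k] by simp
      then show "x \<in> \<Union> ((\<lambda>k. ball (cc k) (2 * \<rho> k)) ` UNIV)" by blast
    qed
    obtain K where K: "finite K" "S \<subseteq> \<Union> ((\<lambda>k. ball (cc k) (2 * \<rho> k)) ` K)"
    proof (rule compactE_image[OF cS _ cov'])
      fix T :: nat show "open (ball (cc T) (2 * \<rho> T))" by simp
    next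
      fix C' :: "nat set" assume "C' \<subseteq> UNIV" "finite C'" "S \<subseteq> \<Union> ((\<lambda>k. ball (cc k) (2 * \<rho> k)) ` C')"
      then show thesis using that by blast
    qed
    define F where "F = (\<lambda>k. (cc k, 2 * \<rho> k)) ` K"
    have finF: "finite F" unfolding F_def using K(1) by simp
    have aS: "a \<in> S" unfolding S_def using a r by simp
    then have "K \<noteq> {}" using K(2) by blast
    then have "F \<noteq> {}" unfolding F_def by blast
    define \<rho>0 where "\<rho>0 = Min (snd ` F)"
    have \<rho>0in: "\<rho>0 \<in> snd ` F" unfolding \<rho>0_def using finF \<open>F \<noteq> {}\<close> by (intro Min_in) auto
    have \<rho>0pos: "\<rho>0 > 0" using \<rho>0in \<rho>pos unfolding F_def by auto
    have \<rho>0le: "\<forall>p\<in>F. snd p \<ge> \<rho>0" unfolding \<rho>0_def using finF by auto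
    obtain n where n: "r / \<rho>0 < 2 ^ n" using real_arch_pow[of 2 "r / \<rho>0"] by auto
    then have rn: "r < 2 ^ n * \<rho>0" using \<rho>0pos by (simp add: divide_less_eq)
    have covF: "E \<inter> cball a r \<subseteq> (\<Union>p\<in>F. cball (fst p) (snd p))"
    proof
      fix x assume "x \<in> E \<inter> cball a r"
      then have "x \<in> S" unfolding S_def .
      then obtain k where "k \<in> K" "x \<in> ball (cc k) (2 * \<rho> k)" using K(2) by blast
      then have "(cc k, 2 * \<rho> k) \<in> F" "x \<in> cball (fst (cc k, 2 * \<rho> k)) (snd (cc k, 2 * \<rho> k))"
        unfolding F_def by auto
      then show "x \<in> (\<Union>p\<in>F. cball (fst p) (snd p))" by blast
    qed
    have wm: "\<And>x y. 0 < x \<Longrightarrow> x \<le> y \<Longrightarrow> g (2*x) \<le> g (2*y)" using gmono by simp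
    have wp: "\<And>t. t > 0 \<Longrightarrow> 0 < g (2*t)" using gpos by simp
    have tb: "c * g (2*r) \<le> (\<Sum>p\<in>F. g (2 * snd p))"
      by (rule tree_bound[where w="\<lambda>\<rho>. g (2*\<rho>)", OF perf hpos wm wp c3 c4 less_imp_le[OF cpos] \<rho>0pos a r rn finF \<rho>0le covF])
    also have "\<dots> \<le> (\<Sum>k\<in>K. g (2 * (2 * \<rho> k)))"
      using sum_image_le[of K "\<lambda>p. g (2 * snd p)" "\<lambda>k. (cc k, 2 * \<rho> k)"] K(1) gpos \<rho>pos
      unfolding F_def by (simp add: less_imp_le o_def)
    also have "\<dots> \<le> (\<Sum>k\<in>K. M * g (2 * \<rho> k))"
      using dbl \<rho>pos small r by (intro sum_mono) (meson order_less_trans)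
    also have "\<dots> = M * (\<Sum>k\<in>K. g (2 * \<rho> k))" by (simp add: sum_distrib_left)
    finally have "c / M * g (2*r) \<le> (\<Sum>k\<in>K. g (2 * \<rho> k))"
      using M1 by (simp add: divide_le_eq mult.commute mult.left_commute)
    then have "ennreal (c / M * g (2*r)) \<le> ennreal (\<Sum>k\<in>K. g (2 * \<rho> k))" by (rule ennreal_leI)
    also have "\<dots> = (\<Sum>k\<in>K. ennreal (g (2 * \<rho> k)))"
      using gpos \<rho>pos by (subst sum_ennreal) (auto intro: less_imp_le)
    also have "\<dots> \<le> (\<Sum>k. ennreal (g (2 * \<rho> k)))" using K(1) by (intro sum_le_suminf) auto
    finally show ?thesis .
  qed
  then show "ennreal (c / M * g (2*r)) \<le> (\<Sum>k. ennreal (g (diameter (cball (fst cr k) (snd cr k)))))"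
    using sumeq by simp
qed

lemma content_upper:
  fixes g :: "real \<Rightarrow> real" and S :: "complex set"
  assumes gpos: "\<And>t. t > 0 \<Longrightarrow> 0 < g t" and glim: "(g \<longlongrightarrow> 0) (at_right 0)"
    and s: "s0 > 0" and S: "S \<subseteq> cball a s0" and e: "eps > 0"
  shows "hausdorff_content g S \<le> ennreal (g (2 * s0) + 2*eps)"
proof -
  have "\<forall>k::nat. \<exists>t>0. g (2*t) \<le> eps*(1/2)^k"
  proof
    fix k :: nat
    have ep: "eps*(1/2)^k > 0" using e by simp
    have "eventually (\<lambda>t. g t < eps*(1/2)^k) (at_right 0)"
      using order_tendstoD(2)[OF glim ep] .
    then have "\<exists>b>0. \<forall>y>0. y < b \<longrightarrow> g y < eps*(1/2)^k"
      using eventually_at_right[OF zero_less_one, of "\<lambda>t. g t < eps*(1/2)^k"] by simp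
    then obtain b where b: "b > 0" "\<forall>y>0. y < b \<longrightarrow> g y < eps*(1/2)^k" by blast
    have "g (2 * (b/4)) < eps*(1/2)^k" using b by simp
    then show "\<exists>t>0. g (2*t) \<le> eps*(1/2)^k" using b(1)
      by (intro exI[of _ "b/4"]) simp
  qed
  then have "\<exists>t. \<forall>k. t k > 0 \<and> g (2 * t k) \<le> eps*(1/2)^k" by (subst (asm) choice_iff) blast
  then obtain t where t0: "\<forall>k. t k > 0 \<and> g (2 * t k) \<le> eps*(1/2)^k" by blast
  have t: "\<And>k. t k > 0" "\<And>k. g (2 * t k) \<le> eps*(1/2)^k" using t0 by blast+
  define \<rho> where "\<rho> k = (if k = 0 then s0 else t k)" for k :: nat
  have \<rho>pos: "\<And>k. \<rho> k > 0" using t s unfolding \<rho>_def by simp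
  have inset: "((\<lambda>k. a), \<rho>) \<in> {(c :: nat \<Rightarrow> complex, \<rho> :: nat \<Rightarrow> real).
                  (\<forall>k. \<rho> k > 0) \<and> S \<subseteq> (\<Union>k. cball (c k) (\<rho> k))}"
  proof -
    have "S \<subseteq> cball a (\<rho> 0)" using S unfolding \<rho>_def by simp
    then have "S \<subseteq> (\<Union>k. cball ((\<lambda>k. a) k) (\<rho> k))" by blast
    then show ?thesis using \<rho>pos unfolding mem_Collect_eq prod.case by blast
  qed
  define b where "b k = (if k = 0 then g (2 * s0) else 0) + eps*(1/2)^k" for k :: nat
  have b1: "(\<lambda>k. if k = 0 then g (2 * s0) else 0) sums g (2 * s0)"
    using sums_single[of 0 "\<lambda>_. g (2 * s0)"] by simp
  have b2: "(\<lambda>k. eps*(1/2)^k) sums (eps * (1 / (1 - 1/2)))"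
    by (intro sums_mult geometric_sums) simp
  have bs: "b sums (g (2 * s0) + eps * (1 / (1 - 1/2)))"
    unfolding b_def by (rule sums_add[OF b1 b2])
  have le: "\<And>k. g (2 * \<rho> k) \<le> b k"
  proof -
    fix k show "g (2 * \<rho> k) \<le> b k"
    proof (cases "k = 0")
      case True then show ?thesis unfolding \<rho>_def b_def using e by simp
    next
      case False then show ?thesis unfolding \<rho>_def b_def using t(2)[of k] by simp
    qed
  qed
  have bnn: "\<And>k. 0 \<le> b k" unfolding b_def using gpos[of "2 * s0"] s e by simp
  have "hausdorff_content g S \<le> (\<Sum>k. ennreal (g (diameter (cball a (\<rho> k)))))"
    unfolding hausdorff_content_def by (rule INF_lower2[OF inset]) simp
  also have "\<dots> = (\<Sum>k. ennreal (g (2 * \<rho> k)))"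
  proof -
    have "\<And>k. diameter (cball a (\<rho> k)) = 2 * \<rho> k"
    proof -
      fix k show "diameter (cball a (\<rho> k)) = 2 * \<rho> k" using \<rho>pos[of k] by (simp add: diameter_cball)
    qed
    then show ?thesis by simp
  qed
  also have "\<dots> \<le> (\<Sum>k. ennreal (b k))"
    by (rule suminf_le) (auto intro: ennreal_leI le)
  also have "\<dots> = ennreal (\<Sum>k. b k)"
    by (rule suminf_ennreal2[OF bnn sums_summable[OF bs]])
  also have "(\<Sum>k. b k) = g (2 * s0) + 2*eps" using sums_unique[OF bs] by simp
  finally show ?thesis .
qed


definition phi :: "real \<Rightarrow> real" where "phi v = v / ln (v + ln 2)"

lemma ln_diff_bound:
  fixes x y c :: real
  assumes "0 < y + c" "y \<le> x"
  shows "ln (x + c) - ln (y + c) \<le> (x - y) / (y + c)"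
proof -
  have pos: "0 < x + c" using assms by linarith
  have "ln ((x + c) / (y + c)) \<le> (x + c) / (y + c) - 1"
    using assms pos by (intro ln_le_minus_one) simp
  moreover have "ln ((x + c) / (y + c)) = ln (x + c) - ln (y + c)" using assms pos by (simp add: ln_div)
  moreover have "(x + c) / (y + c) - 1 = (x - y) / (y + c)" using assms by (simp add: field_simps)
  ultimately show ?thesis by simp
qed

lemma phi_upper_diff:
  assumes "0 \<le> y" "y \<le> x" "0 < ln (y + ln 2)"
  shows "phi x - phi y \<le> (x - y) / ln (y + ln 2)"
proof -
  have l2: "0 < ln (2::real)" by simp
  have "ln (y + ln 2) \<le> ln (x + ln 2)" using assms l2 by (subst ln_le_cancel_iff) auto
  then have "x / ln (x + ln 2) \<le> x / ln (y + ln 2)"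
    using assms by (intro divide_left_mono) auto
  then show ?thesis unfolding phi_def by (simp add: diff_divide_distrib)
qed

lemma phi_mono:
  assumes "0 \<le> y" "y \<le> x" "1 \<le> ln (y + ln 2)"
  shows "phi y \<le> phi x"
proof -
  have l2: "0 < ln (2::real)" by simp
  define a where "a = ln (y + ln 2)"
  define b where "b = ln (x + ln 2)"
  have ypos: "0 < y + ln 2" using assms l2 by linarith
  have xpos: "0 < x + ln 2" using ypos assms by linarith
  have ab: "a \<le> b" unfolding a_def b_def using assms ypos xpos by simp
  have a1: "1 \<le> a" using assms a_def by simp
  have d: "b - a \<le> (x - y) / (y + ln 2)" unfolding a_def b_def by (rule ln_diff_bound[OF ypos assms(2)])
  have "y * (b - a) \<le> y * ((x - y) / (y + ln 2))" using d assms by (intro mult_left_mono) auto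
  also have "\<dots> \<le> x - y"
  proof -
    have "y / (y + ln 2) \<le> 1" using ypos by simp
    then have "y / (y + ln 2) * (x - y) \<le> 1 * (x - y)" using assms by (intro mult_right_mono) auto
    then show ?thesis by simp
  qed
  also have "\<dots> \<le> (x - y) * a" using assms a1 by (simp add: mult_le_cancel_left1)
  finally have "y * b \<le> x * a" by (simp add: algebra_simps)
  then have "y / a \<le> x / b" using a1 ab by (simp add: divide_simps mult.commute)
  then show ?thesis unfolding phi_def a_def b_def .
qed

lemma phi_lower_diff:
  assumes "0 \<le> y" "y \<le> x" "2 \<le> ln (y + ln 2)"
  shows "(x - y) / (2 * ln (x + ln 2)) \<le> phi x - phi y"
proof -
  have l2: "0 < ln (2::real)" by simp
  define a where "a = ln (y + ln 2)"
  define b where "b = ln (x + ln 2)"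
  have ypos: "0 < y + ln 2" using assms l2 by linarith
  have xpos: "0 < x + ln 2" using ypos assms by linarith
  have ab: "a \<le> b" unfolding a_def b_def using assms ypos xpos by simp
  have a2: "2 \<le> a" using assms a_def by simp
  have d: "b - a \<le> (x - y) / (y + ln 2)" unfolding a_def b_def by (rule ln_diff_bound[OF ypos assms(2)])
  have "y * (b - a) \<le> y * ((x - y) / (y + ln 2))" using d assms by (intro mult_left_mono) auto
  also have "\<dots> \<le> x - y"
  proof -
    have "y / (y + ln 2) \<le> 1" using ypos by simp
    then have "y / (y + ln 2) * (x - y) \<le> 1 * (x - y)" using assms by (intro mult_right_mono) auto
    then show ?thesis by simp
  qed
  finally have yb: "y * (b - a) \<le> x - y" .
  have eq: "x / b - y / a = (x - y) / b - y * (b - a) / (a * b)" using a2 ab by (simp add: field_simps)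
  have "y * (b - a) / (a * b) \<le> (x - y) / (a * b)" using yb a2 ab by (intro divide_right_mono) auto
  also have "\<dots> = ((x - y) / b) * (1 / a)" by simp
  also have "\<dots> \<le> ((x - y) / b) * (1 / 2)" using a2 ab assms by (intro mult_left_mono) (auto simp: divide_simps)
  finally have "(x - y) / b - y * (b - a) / (a * b) \<ge> (x - y) / b - ((x - y) / b) * (1/2)" by linarith
  then have "x / b - y / a \<ge> (x - y) / (2 * b)" using eq by (simp add: field_simps)
  then show ?thesis unfolding phi_def a_def b_def .
qed


lemma negpow_bound:
  fixes X Q u \<gamma> :: real
  assumes "0 < X" "X \<le> Q * u" "0 < u" "0 < Q" "0 \<le> \<gamma>"
  shows "Q powr (-\<gamma>) * u powr (-\<gamma>) \<le> X powr (-\<gamma>)"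
proof -
  have "(Q * u) powr (-\<gamma>) \<le> X powr (-\<gamma>)" using assms by (intro powr_mono2') auto
  then show ?thesis by (simp add: powr_mult)
qed

lemma p1_gauge:
  fixes \<gamma> :: real
  assumes g: "\<gamma> > 0"
    and g_def: "g = (\<lambda>t. ln (1 / (1/2 * min t (1/2))) powr (-\<gamma>))"
  shows "gauge_fun g" and "\<And>t. 0 < t \<Longrightarrow> t \<le> 1/2 \<Longrightarrow> g t = ln (2 / t) powr (-\<gamma>)"
    and "\<And>t. 0 < t \<Longrightarrow> 0 < g t" and "\<And>x y. 0 < x \<Longrightarrow> x \<le> y \<Longrightarrow> g x \<le> g y"
    and "(g \<longlongrightarrow> 0) (at_right 0)"
proof -
  have gf: "\<And>t. g t = ln (2 / min t (1/2)) powr (-\<gamma>)" unfolding g_def by (simp add: field_simps)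
  show gform: "\<And>t. 0 < t \<Longrightarrow> t \<le> 1/2 \<Longrightarrow> g t = ln (2 / t) powr (-\<gamma>)" using gf by simp
  have lnpos: "\<And>t::real. 0 < t \<Longrightarrow> 0 < ln (2 / min t (1/2))"
  proof -
    fix t :: real assume "0 < t"
    then have "1 < 2 / min t (1/2)" by (auto simp: min_def field_simps)
    then show "0 < ln (2 / min t (1/2))" by (rule ln_gt_zero)
  qed
  show gpos: "\<And>t. 0 < t \<Longrightarrow> 0 < g t"
  proof -
    fix t :: real assume "0 < t"
    then have "ln (2 / min t (1/2)) \<noteq> 0" using lnpos by force
    then show "0 < g t" unfolding gf by (simp only: powr_gt_zero not_False_eq_True)
  qed
  show gmono: "\<And>x y. 0 < x \<Longrightarrow> x \<le> y \<Longrightarrow> g x \<le> g y"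
  proof -
    fix x y :: real assume xy: "0 < x" "x \<le> y"
    have m: "0 < min x (1/2)" "min x (1/2) \<le> min y (1/2)" using xy by auto
    have "2 / min y (1/2) \<le> 2 / min x (1/2)" using m by (intro divide_left_mono) auto
    then have "ln (2 / min y (1/2)) \<le> ln (2 / min x (1/2))" using m by (subst ln_le_cancel_iff) auto
    then show "g x \<le> g y" unfolding gf using g lnpos[of y] xy by (intro powr_mono2') auto
  qed
  have lim0: "((\<lambda>t. ln (2 / t) powr (-\<gamma>)) \<longlongrightarrow> 0) (at_right 0)"
  proof (rule tendsto_neg_powr)
    show "- \<gamma> < 0" using g by simp
    show "filterlim (\<lambda>t::real. ln (2 / t)) at_top (at_right 0)" by real_asymp
  qed
  have ev: "eventually (\<lambda>t. ln (2 / t) powr (-\<gamma>) = g t) (at_right 0)"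
  proof -
    have "eventually (\<lambda>t::real. 0 < t \<and> t < 1/2) (at_right 0)"
      by (intro eventually_conj eventually_at_right_less) (simp add: eventually_at_right_field exI[of _ "1/2"])
    then show ?thesis by eventually_elim (simp add: gform)
  qed
  show glim: "(g \<longlongrightarrow> 0) (at_right 0)" using Lim_transform_eventually[OF lim0 ev] .
  show "gauge_fun g" unfolding gauge_fun_def using gpos gmono glim by (auto simp: mono_on_def)
qed

lemma part1_fwd:
  fixes E :: "complex set"
  assumes closedE: "closed E" and \<alpha>: "\<alpha> > 1" and C0: "C0 > 0" and r0: "r0 > 0"
    and hup: "h_uniformly_perfect (\<lambda>r. C0 * h1 \<alpha> r) r0 E"
  shows "\<exists>A>0. \<exists>C>0. \<exists>r0>0. \<exists>\<gamma>>0. \<exists>g. gauge_fun g \<and>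
              (\<forall>t\<in>{0<..<2*r0}. g t = (ln (1 / (C * t))) powr (- \<gamma>)) \<and>
              (\<forall>a\<in>E. \<forall>r\<in>{0<..<r0}.
                 hausdorff_content g (E \<inter> cball a r) \<ge> ennreal (A * g (2 * r)))"
proof -
  define \<gamma> where "\<gamma> = ln 2 / ln (\<alpha> + 1)"
  have la: "ln 2 < ln (\<alpha> + 1)" using \<alpha> by simp
  have l2: "0 < ln (2::real)" by simp
  have \<gamma>pos: "\<gamma> > 0" unfolding \<gamma>_def using la l2 by (intro divide_pos_pos) linarith+
  have lapos: "0 < ln (\<alpha> + 1)" using la l2 by linarith
  have \<gamma>eq: "\<gamma> * ln (\<alpha> + 1) = ln 2" unfolding \<gamma>_def using lapos by simp
  have half: "(\<alpha> + 1) powr (-\<gamma>) = 1/2"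
  proof -
    have "(\<alpha> + 1) powr (-\<gamma>) = exp (- (\<gamma> * ln (\<alpha> + 1)))" using \<alpha> by (simp add: powr_def)
    also have "\<dots> = exp (- ln 2)" using \<gamma>eq by simp
    also have "\<dots> = 1/2" by (simp add: exp_minus)
    finally show ?thesis .
  qed
  define g where "g = (\<lambda>t::real. ln (1 / (1/2 * min t (1/2))) powr (-\<gamma>))"
  note G = p1_gauge[OF \<gamma>pos g_def]
  define h where "h = (\<lambda>s. C0 * h1 \<alpha> s)"
  have hU1: "\<And>s. 0 \<le> s \<Longrightarrow> s < r0 \<Longrightarrow> h s \<le> s"
    using hup unfolding h_uniformly_perfect_def h_def by auto
  have hU2: "\<And>a s. a \<in> E \<Longrightarrow> 0 < s \<Longrightarrow> s < r0 \<Longrightarrow> {z. h s \<le> cmod (z - a) \<and> cmod (z - a) \<le> s} \<inter> E \<noteq> {}"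
    using hup unfolding h_uniformly_perfect_def h_def by auto
  define K1 where "K1 = \<bar>ln 3 - ln C0\<bar> + \<alpha> * ln 2 + ln 2 + 1"
  define R where "R = min r0 (min (1/8) (exp (-K1)))"
  have R: "R > 0" "R \<le> r0" "R \<le> 1/8" "R \<le> exp (-K1)" unfolding R_def using r0 by auto
  have perf: "\<And>a s. a\<in>E \<Longrightarrow> 0 < s \<Longrightarrow> s < R \<Longrightarrow> \<exists>z\<in>E. h s \<le> cmod (z - a) \<and> cmod (z - a) \<le> s"
  proof -
    fix a s assume "a \<in> E" "0 < s" "s < R"
    then have "{z. h s \<le> cmod (z - a) \<and> cmod (z - a) \<le> s} \<inter> E \<noteq> {}" using hU2 R by auto
    then show "\<exists>z\<in>E. h s \<le> cmod (z - a) \<and> cmod (z - a) \<le> s" by blast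
  qed
  have hpos: "\<And>s. 0 < s \<Longrightarrow> s < R \<Longrightarrow> 0 < h s \<and> h s \<le> s"
  proof -
    fix s :: real assume "0 < s" "s < R"
    then show "0 < h s \<and> h s \<le> s" using hU1[of s] R C0 unfolding h_def h1_def by auto
  qed
  have cc: "\<And>r. 0 < r \<Longrightarrow> r < R \<Longrightarrow> 1/2 * g (2*r) \<le> g (2 * (h (r/2) / 6)) \<and> g (2*r) \<le> 2 * g (2 * (h (r/2) / 3))"
  proof -
    fix r :: real assume r: "0 < r" "r < R"
    define u where "u = - ln r"
    have "ln r < - K1" using r R by (metis less_le_trans ln_less_cancel_iff ln_exp exp_gt_zero)
    then have uK: "u > K1" unfolding u_def by simp
    have hr2: "0 < h (r/2)" "h (r/2) \<le> r/2" using hpos[of "r/2"] r by auto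
    define p where "p = h (r/2) / 3"
    have ppos: "0 < p" and p1: "p < 1" using hr2 r R unfolding p_def by auto
    have pe: "p = C0 * (r/2) powr \<alpha> / 3" unfolding p_def h_def h1_def by simp
    have "ln p = ln (C0 * (r/2) powr \<alpha> / 3)" by (simp only: pe)
    also have "\<dots> = ln (C0 * (r/2) powr \<alpha>) - ln 3" using C0 r by (intro ln_divide_pos) auto
    also have "ln (C0 * (r/2) powr \<alpha>) = ln C0 + ln ((r/2) powr \<alpha>)" using C0 r by (intro ln_mult_pos) auto
    also have "ln ((r/2) powr \<alpha>) = \<alpha> * ln (r/2)" by simp
    also have "ln (r/2) = ln r - ln 2" using r by (intro ln_divide_pos) auto
    finally have lnp: "ln p = ln C0 + \<alpha> * (ln r - ln 2) - ln 3" .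
    have lnpneg: "ln p < 0" using ppos p1 by simp
    have abs1: "ln 3 - ln C0 \<le> \<bar>ln 3 - ln C0\<bar>" by simp
    have X1: "- ln p \<le> (\<alpha> + 1) * u" using lnp uK abs1 unfolding K1_def u_def by (simp add: algebra_simps) (use l2 in linarith)
    have X2: "ln 2 - ln p \<le> (\<alpha> + 1) * u" using lnp uK abs1 unfolding K1_def u_def by (simp add: algebra_simps)
    have upos: "0 < u" using uK unfolding K1_def using \<alpha> l2 by (smt (verit) abs_ge_zero mult_pos_pos)
    have g2r: "g (2*r) = u powr (-\<gamma>)"
      using G(2)[of "2*r"] r R unfolding u_def by (simp add: ln_div)
    have gp: "g (2 * (h (r/2) / 6)) = (ln 2 - ln p) powr (-\<gamma>)"
    proof -
      have "2 * (h (r/2) / 6) = p" unfolding p_def by simp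
      moreover have "g p = ln (2 / p) powr (-\<gamma>)" using G(2)[of p] ppos hr2 r R unfolding p_def by auto
      moreover have "ln (2 / p) = ln 2 - ln p" using ppos by (simp add: ln_div)
      ultimately show ?thesis by simp
    qed
    have g2p: "g (2 * (h (r/2) / 3)) = (- ln p) powr (-\<gamma>)"
    proof -
      have "2 * (h (r/2) / 3) = 2 * p" unfolding p_def by simp
      moreover have "g (2*p) = ln (2 / (2*p)) powr (-\<gamma>)" using G(2)[of "2*p"] ppos hr2 r R unfolding p_def by auto
      moreover have "ln (2 / (2*p)) = - ln p" using ppos by (simp add: ln_div)
      ultimately show ?thesis by simp
    qed
    have i1: "(\<alpha> + 1) powr (-\<gamma>) * u powr (-\<gamma>) \<le> (ln 2 - ln p) powr (-\<gamma>)"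
    proof -
      have lnp2: "0 < ln 2 - ln p" using lnpneg l2 by linarith
      show ?thesis by (rule negpow_bound[OF lnp2 X2 upos]) (use \<alpha> \<gamma>pos in auto)
    qed
    have i2: "(\<alpha> + 1) powr (-\<gamma>) * u powr (-\<gamma>) \<le> (- ln p) powr (-\<gamma>)"
      using X1 lnpneg l2 upos \<alpha> \<gamma>pos by (intro negpow_bound) auto
    show "1/2 * g (2*r) \<le> g (2 * (h (r/2) / 6)) \<and> g (2*r) \<le> 2 * g (2 * (h (r/2) / 3))"
      using i1 i2 unfolding half g2r gp g2p by simp
  qed
  have dbl: "\<And>\<rho>. 0 < \<rho> \<Longrightarrow> \<rho> < R \<Longrightarrow> g (2 * (2 * \<rho>)) \<le> 2 powr \<gamma> * g (2 * \<rho>)"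
  proof -
    fix \<rho> :: real assume \<rho>: "0 < \<rho>" "\<rho> < R"
    have "ln \<rho> < ln (1/8)" using \<rho> R by simp
    moreover have "ln (8::real) = 3 * ln 2"
    proof -
      have "ln ((2::real)^3) = real 3 * ln 2" by (rule ln_realpow)
      then show ?thesis by simp
    qed
    ultimately have l8: "ln \<rho> < - 3 * ln 2" by (simp add: ln_div)
    have e1: "g (2 * (2 * \<rho>)) = (- ln 2 - ln \<rho>) powr (-\<gamma>)"
    proof -
      have "g (2 * (2 * \<rho>)) = ln (2 / (2 * (2 * \<rho>))) powr (-\<gamma>)" using G(2)[of "2*(2*\<rho>)"] \<rho> R by auto
      moreover have "ln (2 / (2 * (2 * \<rho>))) = - ln 2 - ln \<rho>" using \<rho> by (simp add: ln_div ln_mult)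
      ultimately show ?thesis by simp
    qed
    have e2: "g (2 * \<rho>) = (- ln \<rho>) powr (-\<gamma>)"
    proof -
      have "g (2 * \<rho>) = ln (2 / (2 * \<rho>)) powr (-\<gamma>)" using G(2)[of "2*\<rho>"] \<rho> R by auto
      moreover have "ln (2 / (2 * \<rho>)) = - ln \<rho>" using \<rho> by (simp add: ln_div)
      ultimately show ?thesis by simp
    qed
    have "2 powr (-\<gamma>) * (- ln 2 - ln \<rho>) powr (-\<gamma>) \<le> (- ln \<rho>) powr (-\<gamma>)"
      using l8 l2 \<gamma>pos by (intro negpow_bound) (auto, (use l2 in linarith)+)
    then have "2 powr \<gamma> * (2 powr (-\<gamma>) * (- ln 2 - ln \<rho>) powr (-\<gamma>)) \<le> 2 powr \<gamma> * (- ln \<rho>) powr (-\<gamma>)"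
      by (intro mult_left_mono) auto
    moreover have "2 powr \<gamma> * 2 powr (-\<gamma>) = (1::real)" by (simp add: powr_add[symmetric])
    ultimately show "g (2 * (2 * \<rho>)) \<le> 2 powr \<gamma> * g (2 * \<rho>)" unfolding e1 e2
      by (simp add: mult.assoc[symmetric])
  qed
  have c3: "\<And>r. 0 < r \<Longrightarrow> r < R \<Longrightarrow> 1/2 * g (2*r) \<le> g (2 * (h (r/2) / 6))" using cc by blast
  have c4: "\<And>r. 0 < r \<Longrightarrow> r < R \<Longrightarrow> g (2*r) \<le> 2 * g (2 * (h (r/2) / 3))" using cc by blast
  have M1: "(1::real) \<le> 2 powr \<gamma>" using \<gamma>pos by (intro ge_one_powr_ge_zero) auto
  define A where "A = 1/2 / 2 powr \<gamma>"
  have Apos: "A > 0" unfolding A_def by simp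
  have bound: "\<forall>a\<in>E. \<forall>r\<in>{0<..<R}. hausdorff_content g (E \<inter> cball a r) \<ge> ennreal (A * g (2 * r))"
  proof (intro ballI)
    fix a r assume a: "a \<in> E" and r: "r \<in> {0<..<R}"
    show "hausdorff_content g (E \<inter> cball a r) \<ge> ennreal (A * g (2 * r))"
      unfolding A_def
    proof (rule forward[OF closedE perf hpos G(4) G(3) c3 c4 dbl _ _ M1 a])
      show "0 < r" "r < R" using r by auto
    qed simp_all
  qed
  have form: "\<forall>t\<in>{0<..<2*R}. g t = (ln (1 / (1/2 * t))) powr (- \<gamma>)"
    using R unfolding g_def by auto
  have all: "gauge_fun g \<and> (\<forall>t\<in>{0<..<2*R}. g t = (ln (1 / (1/2 * t))) powr (- \<gamma>)) \<and>
      (\<forall>a\<in>E. \<forall>r\<in>{0<..<R}. hausdorff_content g (E \<inter> cball a r) \<ge> ennreal (A * g (2 * r)))"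
    using G(1) form bound by blast
  have h0: "(1/2::real) > 0" by simp
  show ?thesis using all Apos R(1) \<gamma>pos h0 by blast
qed

lemma bwd_step:
  fixes E :: "complex set" and g :: "real \<Rightarrow> real"
  assumes gpos: "\<And>t. t > 0 \<Longrightarrow> 0 < g t" and glim: "(g \<longlongrightarrow> 0) (at_right 0)"
    and bound: "ennreal (A * g (2 * r)) \<le> hausdorff_content g (E \<inter> cball a r)"
    and s: "s > 0" and sub: "E \<inter> cball a r \<subseteq> cball a s"
  shows "A * g (2 * r) \<le> g (2 * s)"
proof (rule field_le_epsilon)
  fix e :: real assume e: "0 < e"
  have "hausdorff_content g (E \<inter> cball a r) \<le> ennreal (g (2 * s) + 2 * (e/2))"
    using content_upper[OF gpos glim s sub, of "e/2"] e by simp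
  then have "ennreal (A * g (2 * r)) \<le> ennreal (g (2 * s) + e)" using bound by simp
  moreover have "0 \<le> g (2 * s) + e" using gpos[of "2 * s"] s e by simp
  ultimately show "A * g (2 * r) \<le> g (2 * s) + e" by (simp add: ennreal_le_iff)
qed

lemma annulus_sub:
  fixes E :: "complex set"
  assumes "{z. hs \<le> cmod (z - a) \<and> cmod (z - a) \<le> r} \<inter> E = {}"
  shows "E \<inter> cball a r \<subseteq> cball a hs"
proof
  fix z assume z: "z \<in> E \<inter> cball a r"
  have d: "dist a z = cmod (z - a)" by (simp add: dist_complex_def norm_minus_commute)
  then have "cmod (z - a) \<le> r" using z by simp
  then have "\<not> hs \<le> cmod (z - a)" using assms z by blast
  then show "z \<in> cball a hs" using d by simp
qed

lemma negpow_upper: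
  fixes X Q Y \<gamma> :: real
  assumes "0 < Q * X" "Q * X \<le> Y" "0 \<le> \<gamma>"
  shows "Y powr (-\<gamma>) \<le> Q powr (-\<gamma>) * X powr (-\<gamma>)"
proof -
  have "Y powr (-\<gamma>) \<le> (Q * X) powr (-\<gamma>)" using assms by (intro powr_mono2') auto
  then show ?thesis by (simp add: powr_mult)
qed

lemma part1_bwd:
  fixes E :: "complex set"
  assumes closedE: "closed E" and A: "A > 0" and C: "C > 0" and r0: "r0 > 0" and \<gamma>: "\<gamma> > 0"
    and gg: "gauge_fun g" and form: "\<forall>t\<in>{0<..<2*r0}. g t = (ln (1 / (C * t))) powr (- \<gamma>)"
    and bound: "\<forall>a\<in>E. \<forall>r\<in>{0<..<r0}. hausdorff_content g (E \<inter> cball a r) \<ge> ennreal (A * g (2 * r))"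
  shows "\<exists>\<alpha>>1. condU1 \<alpha> E"
proof -
  have gpos: "\<And>t. t > 0 \<Longrightarrow> 0 < g t" using gg unfolding gauge_fun_def by auto
  have glim: "(g \<longlongrightarrow> 0) (at_right 0)" using gg unfolding gauge_fun_def by auto
  define k where "k = ln C + ln 2"
  define a0 where "a0 = A powr (-1/\<gamma>)"
  have a0pos: "a0 > 0" unfolding a0_def using A by simp
  define \<alpha> where "\<alpha> = 4 * a0 + 2"
  have \<alpha>1: "\<alpha> > 1" unfolding \<alpha>_def using a0pos by simp
  define K where "K = 2 * \<bar>k\<bar> + 1"
  define r1 where "r1 = min r0 (exp (-K))"
  have r1: "r1 > 0" "r1 \<le> r0" "r1 \<le> exp (-K)" unfolding r1_def using r0 by auto
  have K0: "K > 0" unfolding K_def by simp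
  have r1lt1: "r1 < 1" using r1(3) K0 by (smt (verit) exp_less_one_iff)
  have q: "(\<alpha>/4) powr (-\<gamma>) < A"
  proof -
    have "(\<alpha>/4) powr (-\<gamma>) < a0 powr (-\<gamma>)"
      using a0pos \<gamma> unfolding \<alpha>_def by (intro powr_less_mono2_neg) auto
    also have "a0 powr (-\<gamma>) = A" unfolding a0_def using A \<gamma> by (simp add: powr_powr)
    finally show ?thesis .
  qed
  have key: "\<And>r. 0 < r \<Longrightarrow> r < r1 \<Longrightarrow> g (2 * r powr \<alpha>) < A * g (2 * r)"
  proof -
    fix r :: real assume r: "0 < r" "r < r1"
    define u where "u = - ln r"
    have "ln r < - K" using r r1 by (metis less_le_trans ln_less_cancel_iff ln_exp exp_gt_zero)
    then have uK: "u > K" unfolding u_def by simp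
    have upos: "u > 0" using uK K0 by simp
    have rpow: "0 < r powr \<alpha>" "r powr \<alpha> \<le> r" using r r1lt1 r1 \<alpha>1 by (auto intro: powr_le_one_le)
    have gX: "g (2 * r) = (u - k) powr (-\<gamma>)"
    proof -
      have "g (2 * r) = ln (1 / (C * (2 * r))) powr (-\<gamma>)" using form r r1 by auto
      moreover have "ln (1 / (C * (2 * r))) = u - k" unfolding u_def k_def using r C
        by (simp add: ln_div ln_mult)
      ultimately show ?thesis by simp
    qed
    have gY: "g (2 * r powr \<alpha>) = (\<alpha> * u - k) powr (-\<gamma>)"
    proof -
      have "g (2 * r powr \<alpha>) = ln (1 / (C * (2 * r powr \<alpha>))) powr (-\<gamma>)" using form rpow r r1 by auto
      moreover have "ln (1 / (C * (2 * r powr \<alpha>))) = \<alpha> * u - k" unfolding u_def k_def using r C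
        by (simp add: ln_div ln_mult)
      ultimately show ?thesis by simp
    qed
    have kabs: "k \<le> \<bar>k\<bar>" "- k \<le> \<bar>k\<bar>" by auto
    have Xpos: "u - k > 0" using uK kabs unfolding K_def by linarith
    have X2: "u - k \<le> 2 * u" using uK kabs unfolding K_def by linarith
    have au: "\<alpha> * u \<ge> u" using \<alpha>1 upos by simp
    have Y: "\<alpha>/4 * (u - k) \<le> \<alpha> * u - k"
    proof -
      have "\<alpha>/4 * (u - k) \<le> \<alpha>/4 * (2 * u)" using X2 \<alpha>1 by (intro mult_left_mono) auto
      also have "\<dots> = \<alpha> * u / 2" by simp
      also have "\<dots> \<le> \<alpha> * u - k" using au uK kabs unfolding K_def by linarith
      finally show ?thesis .
    qed
    have "g (2 * r powr \<alpha>) \<le> (\<alpha>/4) powr (-\<gamma>) * (u - k) powr (-\<gamma>)"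
      unfolding gY by (rule negpow_upper[OF _ Y]) (use Xpos \<alpha>1 \<gamma> in auto)
    also have "\<dots> < A * (u - k) powr (-\<gamma>)"
      using q Xpos by (intro mult_strict_right_mono) auto
    finally show "g (2 * r powr \<alpha>) < A * g (2 * r)" unfolding gX .
  qed
  have hU: "h_uniformly_perfect (\<lambda>r. 1 * h1 \<alpha> r) r1 E"
    unfolding h_uniformly_perfect_def
  proof (intro conjI ballI)
    show "closed E" by fact
    show "mono_on {0..<r1} (\<lambda>r. 1 * h1 \<alpha> r)"
      unfolding h1_def by (intro mono_onI) (use \<alpha>1 in \<open>auto intro: powr_mono2\<close>)
    fix r assume r: "r \<in> {0..<r1}"
    show "1 * h1 \<alpha> r \<le> r"
    proof (cases "r = 0")
      case True then show ?thesis unfolding h1_def by simp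
    next
      case False then show ?thesis unfolding h1_def using r r1lt1 \<alpha>1 by (auto intro: powr_le_one_le)
    qed
  next
    fix a r assume a: "a \<in> E" and r: "r \<in> {0<..<r1}"
    show "{z. 1 * h1 \<alpha> r \<le> cmod (z - a) \<and> cmod (z - a) \<le> r} \<inter> E \<noteq> {}"
    proof
      assume emp: "{z. 1 * h1 \<alpha> r \<le> cmod (z - a) \<and> cmod (z - a) \<le> r} \<inter> E = {}"
      have sub: "E \<inter> cball a r \<subseteq> cball a (r powr \<alpha>)"
        using annulus_sub[OF emp] unfolding h1_def by simp
      have b: "ennreal (A * g (2 * r)) \<le> hausdorff_content g (E \<inter> cball a r)"
        using bound a r r1 by auto
      have "A * g (2 * r) \<le> g (2 * r powr \<alpha>)"
        by (rule bwd_step[OF gpos glim b _ sub]) (use r in auto)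
      then show False using key[of r] r by simp
    qed
  qed
  have "\<exists>C>0. \<exists>r0>0. h_uniformly_perfect (\<lambda>r. C * h1 \<alpha> r) r0 E"
  proof -
    have "0 < (1::real) \<and> (\<exists>r0>0. h_uniformly_perfect (\<lambda>r. 1 * h1 \<alpha> r) r0 E)" using hU r1(1) by (auto intro!: exI[of _ r1])
    then show ?thesis by blast
  qed
  then show ?thesis unfolding condU1_def using \<alpha>1 by blast
qed


lemma ln4: "0 < t \<Longrightarrow> ln (4 / t) = ln (2 / t) + ln (2::real)"
proof -
  assume t: "0 < t"
  have "4 / t = (2 / t) * 2" by simp
  then have "ln (4 / t) = ln ((2 / t) * 2)" by simp
  also have "\<dots> = ln (2 / t) + ln 2" using t by (intro ln_mult_pos) auto
  finally show ?thesis .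
qed

lemma exp1_le4: "exp (1::real) \<le> 4"
proof -
  have "norm (exp (1/2::real)) \<le> 2" by (rule exp_bound_half) simp
  then have h: "exp (1/2::real) \<le> 2" by simp
  have "exp (1::real) = exp (1/2) * exp (1/2)" by (simp add: exp_add[symmetric])
  also have "\<dots> \<le> 2 * 2" using h by (intro mult_mono) auto
  finally show ?thesis by simp
qed

lemma ln_ge1: "4 \<le> x \<Longrightarrow> 1 \<le> ln (x::real)"
proof -
  assume x: "4 \<le> x"
  have "exp 1 \<le> x" using exp1_le4 x by linarith
  then have "ln (exp 1) \<le> ln x" using x by (subst ln_le_cancel_iff) auto
  then show ?thesis by simp
qed

lemma p2_gauge:
  fixes \<eta> :: real
  assumes eta: "\<eta> > 0"
    and g_def: "g = (\<lambda>t. exp (- \<eta> * ln (2 / min t (2 * exp (-4))) / ln (ln (4 / min t (2 * exp (-4))))))"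
  shows "gauge_fun g"
    and "\<And>t. 0 < t \<Longrightarrow> t \<le> 2 * exp (-4) \<Longrightarrow> g t = exp (- \<eta> * ln (2 / t) / ln (ln (4 / t)))"
    and "\<And>t. 0 < t \<Longrightarrow> t \<le> 2 * exp (-4) \<Longrightarrow> g t = exp (- \<eta> * phi (ln (2 / t)))"
    and "\<And>t. 0 < t \<Longrightarrow> 0 < g t" and "\<And>x y. 0 < x \<Longrightarrow> x \<le> y \<Longrightarrow> g x \<le> g y"
    and "(g \<longlongrightarrow> 0) (at_right 0)"
proof -
  define T :: real where "T = 2 * exp (-4)"
  have T: "0 < T" unfolding T_def by simp
  show gform: "\<And>t. 0 < t \<Longrightarrow> t \<le> 2 * exp (-4) \<Longrightarrow> g t = exp (- \<eta> * ln (2 / t) / ln (ln (4 / t)))"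
    unfolding g_def by simp
  have gphi_gen: "\<And>m. 0 < m \<Longrightarrow> exp (- \<eta> * ln (2 / m) / ln (ln (4 / m))) = exp (- \<eta> * phi (ln (2 / m)))"
    unfolding phi_def by (simp add: ln4)
  show gphi: "\<And>t. 0 < t \<Longrightarrow> t \<le> 2 * exp (-4) \<Longrightarrow> g t = exp (- \<eta> * phi (ln (2 / t)))"
    using gform gphi_gen by simp
  show gpos: "\<And>t. 0 < t \<Longrightarrow> 0 < g t" unfolding g_def by simp
  have V: "\<And>m. 0 < m \<Longrightarrow> m \<le> T \<Longrightarrow> 4 \<le> ln (2 / m)"
  proof -
    fix m :: real assume m: "0 < m" "m \<le> T"
    have "2 / T \<le> 2 / m" using m T by (intro divide_left_mono) auto
    moreover have "2 / T = exp 4"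
    proof -
      have e: "exp (-4::real) * exp 4 = 1" by (simp flip: exp_add)
      show ?thesis unfolding T_def using e by (simp add: field_simps)
    qed
    ultimately have "exp 4 \<le> 2 / m" by simp
    then have "ln (exp 4) \<le> ln (2 / m)" using m by (subst ln_le_cancel_iff) auto
    then show "4 \<le> ln (2 / m)" by simp
  qed
  have lnV: "\<And>v::real. 4 \<le> v \<Longrightarrow> 1 \<le> ln (v + ln 2)"
  proof -
    fix v :: real assume "4 \<le> v"
    moreover have "0 < ln (2::real)" by (rule ln_gt_zero) simp
    ultimately have "4 \<le> v + ln 2" by linarith
    then show "1 \<le> ln (v + ln 2)" by (rule ln_ge1)
  qed
  show gmono: "\<And>x y. 0 < x \<Longrightarrow> x \<le> y \<Longrightarrow> g x \<le> g y"
  proof -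
    fix x y :: real assume xy: "0 < x" "x \<le> y"
    define mx where "mx = min x T"
    define my where "my = min y T"
    have m: "0 < mx" "mx \<le> my" "my \<le> T" "0 < my" unfolding mx_def my_def using xy T by auto
    have "2 / my \<le> 2 / mx" using m by (intro divide_left_mono) auto
    then have vle: "ln (2 / my) \<le> ln (2 / mx)" using m by (subst ln_le_cancel_iff) auto
    have v3: "4 \<le> ln (2 / my)" using V m by auto
    have "phi (ln (2 / my)) \<le> phi (ln (2 / mx))"
      using v3 vle lnV[OF v3] by (intro phi_mono) auto
    then have "exp (- \<eta> * phi (ln (2 / mx))) \<le> exp (- \<eta> * phi (ln (2 / my)))" using eta by simp
    moreover have "g x = exp (- \<eta> * phi (ln (2 / mx)))"
    proof -
      have "g x = exp (- \<eta> * ln (2 / mx) / ln (ln (4 / mx)))" unfolding g_def mx_def T_def by simp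
      then show ?thesis using gphi_gen[OF m(1)] by simp
    qed
    moreover have "g y = exp (- \<eta> * phi (ln (2 / my)))"
    proof -
      have "g y = exp (- \<eta> * ln (2 / my) / ln (ln (4 / my)))" unfolding g_def my_def T_def by simp
      then show ?thesis using gphi_gen[OF m(4)] by simp
    qed
    ultimately show "g x \<le> g y" by simp
  qed
  have Zlim: "filterlim (\<lambda>t::real. ln (2 / t) / ln (ln (4 / t))) at_top (at_right 0)" by real_asymp
  have lim1: "filterlim (\<lambda>t::real. (- \<eta>) * (ln (2 / t) / ln (ln (4 / t)))) at_bot (at_right 0)"
    by (rule filterlim_tendsto_neg_mult_at_bot[OF tendsto_const _ Zlim]) (use eta in simp)
  have lim0: "((\<lambda>t::real. exp (- \<eta> * ln (2 / t) / ln (ln (4 / t)))) \<longlongrightarrow> 0) (at_right 0)"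
    using filterlim_compose[OF exp_at_bot lim1] by simp
  have ev: "eventually (\<lambda>t. exp (- \<eta> * ln (2 / t) / ln (ln (4 / t))) = g t) (at_right 0)"
  proof -
    have "eventually (\<lambda>t::real. 0 < t \<and> t < T) (at_right 0)"
    proof (intro eventually_conj eventually_at_right_less)
      show "eventually (\<lambda>t::real. t < T) (at_right 0)"
        unfolding eventually_at_right_field using T by blast
    qed
    then show ?thesis by eventually_elim (simp add: gform T_def)
  qed
  show glim: "(g \<longlongrightarrow> 0) (at_right 0)" using Lim_transform_eventually[OF lim0 ev] .
  show "gauge_fun g" unfolding gauge_fun_def using gpos gmono glim by (auto simp: mono_on_def)
qed

lemma exp_le_M: "a \<le> b + c \<Longrightarrow> exp a \<le> exp c * exp (b::real)"
proof -
  assume "a \<le> b + c"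
  then have "exp a \<le> exp (b + c)" by simp
  also have "\<dots> = exp c * exp b" by (simp add: exp_add mult.commute)
  finally show ?thesis .
qed

lemma part2_fwd:
  fixes E :: "complex set"
  assumes closedE: "closed E" and \<beta>: "\<beta> > 0" and C0: "C0 > 0" and r0: "r0 > 0"
    and hup: "h_uniformly_perfect (\<lambda>r. C0 * h2 \<beta> r) r0 E"
  shows "\<exists>A>0. \<exists>r0>0. \<exists>\<eta>>0. \<exists>g. gauge_fun g \<and>
              (\<forall>t\<in>{0<..<2*r0}. g t = exp (- \<eta> * ln (2 / t) / ln (ln (4 / t)))) \<and>
              (\<forall>a\<in>E. \<forall>r\<in>{0<..<r0}.
                 hausdorff_content g (E \<inter> cball a r) \<ge> ennreal (A * g (2 * r)))"
proof -
  have l2: "0 < ln (2::real)" by (rule ln_gt_zero) simp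
  have l2le: "ln (2::real) \<le> 1" using ln_le_minus_one[of 2] by simp
  define \<eta> where "\<eta> = ln 2 / (\<beta> + 1)"
  have \<eta>pos: "\<eta> > 0" unfolding \<eta>_def using l2 \<beta> by (intro divide_pos_pos) auto
  have \<eta>eq: "\<eta> * (1 + \<beta>) = ln 2" unfolding \<eta>_def using \<beta> by (simp add: add.commute)
  define g where "g = (\<lambda>t. exp (- \<eta> * ln (2 / min t (2 * exp (-4))) / ln (ln (4 / min t (2 * exp (-4))))))"
  note G = p2_gauge[OF \<eta>pos g_def]
  define h where "h = (\<lambda>s. C0 * h2 \<beta> s)"
  have hU1: "\<And>s. 0 \<le> s \<Longrightarrow> s < r0 \<Longrightarrow> h s \<le> s"
    using hup unfolding h_uniformly_perfect_def h_def by auto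
  have hU2: "\<And>a s. a \<in> E \<Longrightarrow> 0 < s \<Longrightarrow> s < r0 \<Longrightarrow> {z. h s \<le> cmod (z - a) \<and> cmod (z - a) \<le> s} \<inter> E \<noteq> {}"
    using hup unfolding h_uniformly_perfect_def h_def by auto
  define k1 where "k1 = ln 2 + ln 3 - ln C0"
  define Dreq where "Dreq = \<bar>k1\<bar> + \<bar>k1\<bar> / \<beta> + 2"
  define R where "R = min r0 (min (exp (-4) / 2) (exp (- exp Dreq)))"
  have R: "R > 0" "R \<le> r0" "R \<le> exp (-4) / 2" "R \<le> exp (- exp Dreq)" unfolding R_def using r0 by auto
  have e4: "exp (-4::real) < 1" by simp
  have R1: "R < 1/2" using R(3) e4 by linarith
  have perf: "\<And>a s. a\<in>E \<Longrightarrow> 0 < s \<Longrightarrow> s < R \<Longrightarrow> \<exists>z\<in>E. h s \<le> cmod (z - a) \<and> cmod (z - a) \<le> s"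
  proof -
    fix a s assume "a \<in> E" "0 < s" "s < R"
    then have "{z. h s \<le> cmod (z - a) \<and> cmod (z - a) \<le> s} \<inter> E \<noteq> {}" using hU2 R by auto
    then show "\<exists>z\<in>E. h s \<le> cmod (z - a) \<and> cmod (z - a) \<le> s" by blast
  qed
  have hpos: "\<And>s. 0 < s \<Longrightarrow> s < R \<Longrightarrow> 0 < h s \<and> h s \<le> s"
  proof -
    fix s :: real assume s: "0 < s" "s < R"
    have "1 < 1 / s" using s R1 by (simp add: field_simps)
    then have "0 < ln (1 / s)" by (rule ln_gt_zero)
    then have "0 < ln (1 / s) powr (-\<beta>)" by simp
    then have "0 < h s" unfolding h_def h2_def using C0 s by simp
    moreover have "h s \<le> s" using hU1[of s] s R by auto
    ultimately show "0 < h s \<and> h s \<le> s" by simp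
  qed
  have cc: "\<And>r. 0 < r \<Longrightarrow> r < R \<Longrightarrow> 1/2 * g (2*r) \<le> g (2 * (h (r/2) / 6)) \<and> g (2*r) \<le> 2 * g (2 * (h (r/2) / 3))"
  proof -
    fix r :: real assume r: "0 < r" "r < R"
    define u where "u = - ln r"
    have "ln r \<le> - exp Dreq" using r R
      by (metis less_le_trans less_imp_le ln_exp ln_le_cancel_iff exp_gt_zero)
    then have uD: "u \<ge> exp Dreq" unfolding u_def by simp
    have upos: "u > 0" using uD exp_gt_zero[of Dreq] by linarith
    define L2 where "L2 = u + ln 2"
    have L2eq: "ln (2 / r) = L2" unfolding L2_def u_def using r by (simp add: ln_divide_pos)
    have L2pos: "0 < L2" unfolding L2_def using upos l2 by linarith
    define D where "D = ln L2"
    have "exp Dreq \<le> L2" using uD l2 unfolding L2_def by linarith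
    then have "ln (exp Dreq) \<le> ln L2" using L2pos by (subst ln_le_cancel_iff) auto
    then have DD: "D \<ge> Dreq" unfolding D_def by simp
    have kabs: "k1 \<le> \<bar>k1\<bar>" "- k1 \<le> \<bar>k1\<bar>" by auto
    have kb: "\<bar>k1\<bar> / \<beta> \<ge> 0" using \<beta> by simp
    have D1: "D \<ge> \<bar>k1\<bar> + 1" using DD kb unfolding Dreq_def by linarith
    have Dpos: "D > 0" using D1 by simp
    have bD: "\<beta> * D \<ge> \<bar>k1\<bar>"
    proof -
      have "\<beta> * D \<ge> \<beta> * (\<bar>k1\<bar> / \<beta>)" using DD kb \<beta> unfolding Dreq_def by (intro mult_left_mono) auto
      then show ?thesis using \<beta> by simp
    qed
    have hr2: "0 < h (r/2)" "h (r/2) \<le> r/2" using hpos[of "r/2"] r by auto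
    define p where "p = h (r/2) / 3"
    have ppos: "0 < p" and ple: "p \<le> r/6" using hr2 unfolding p_def by auto
    have pe: "p = C0 * ((r/2) * ln (2 / r) powr (-\<beta>)) / 3" unfolding p_def h_def h2_def by simp
    have "ln p = ln (C0 * ((r/2) * ln (2 / r) powr (-\<beta>)) / 3)" by (simp only: pe)
    also have "\<dots> = ln (C0 * ((r/2) * L2 powr (-\<beta>))) - ln 3"
      using C0 r L2pos unfolding L2eq by (intro ln_divide_pos) auto
    also have "ln (C0 * ((r/2) * L2 powr (-\<beta>))) = ln C0 + ln ((r/2) * L2 powr (-\<beta>))"
      using C0 r L2pos by (intro ln_mult_pos) auto
    also have "ln ((r/2) * L2 powr (-\<beta>)) = ln (r/2) + ln (L2 powr (-\<beta>))"
      using r L2pos by (intro ln_mult_pos) auto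
    also have "ln (L2 powr (-\<beta>)) = - \<beta> * D" unfolding D_def by simp
    also have "ln (r/2) = ln r - ln 2" using r by (intro ln_divide_pos) auto
    finally have lnp: "ln p = ln C0 + (ln r - ln 2 + - \<beta> * D) - ln 3" .
    define X where "X = - ln p"
    have Xe: "X = u + k1 + \<beta> * D" unfolding X_def u_def k1_def using lnp by simp
    define X2 where "X2 = ln 2 - ln p"
    have X2e: "X2 = u + (k1 + ln 2) + \<beta> * D" unfolding X2_def u_def k1_def using lnp by simp
    have Dln: "D = ln (u + ln 2)" unfolding D_def L2_def ..
    have uX: "u \<le> X" using Xe bD kabs by linarith
    have uX2: "u \<le> X2" using X2e bD kabs l2 by linarith
    have pdX: "phi X - phi u \<le> 1 + \<beta>"
    proof -
      have "phi X - phi u \<le> (X - u) / D" unfolding Dln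
        using upos uX Dpos Dln by (intro phi_upper_diff) auto
      also have "(X - u) / D = k1 / D + \<beta>" unfolding Xe using Dpos by (simp add: field_simps)
      also have "k1 / D \<le> 1" using D1 kabs Dpos by (simp add: divide_le_eq)
      finally show ?thesis by simp
    qed
    have pdX2: "phi X2 - phi u \<le> 1 + \<beta>"
    proof -
      have "phi X2 - phi u \<le> (X2 - u) / D" unfolding Dln
        using upos uX2 Dpos Dln by (intro phi_upper_diff) auto
      also have "(X2 - u) / D = (k1 + ln 2) / D + \<beta>" unfolding X2e using Dpos by (simp add: field_simps)
      also have "(k1 + ln 2) / D \<le> 1" using D1 kabs Dpos l2le by (simp add: divide_le_eq)
      finally show ?thesis by simp
    qed
    have Rle: "R \<le> exp (-4)" using R(3) R(1) by linarith
    have g2r: "g (2*r) = exp (- \<eta> * phi u)"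
    proof -
      have "g (2*r) = exp (- \<eta> * phi (ln (2 / (2*r))))" using G(3)[of "2*r"] r R by auto
      moreover have "ln (2 / (2*r)) = u" unfolding u_def using r by (simp add: ln_divide_pos)
      ultimately show ?thesis by simp
    qed
    have g2p: "g (2 * (h (r/2) / 3)) = exp (- \<eta> * phi X)"
    proof -
      have "g (2*p) = exp (- \<eta> * phi (ln (2 / (2*p))))" using G(3)[of "2*p"] ppos ple r R by auto
      moreover have "ln (2 / (2*p)) = X" unfolding X_def using ppos by (simp add: ln_divide_pos)
      ultimately show ?thesis unfolding p_def by simp
    qed
    have gp: "g (2 * (h (r/2) / 6)) = exp (- \<eta> * phi X2)"
    proof -
      have "g p = exp (- \<eta> * phi (ln (2 / p)))" using G(3)[of p] ppos ple r R by auto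
      moreover have "ln (2 / p) = X2" unfolding X2_def using ppos by (simp add: ln_divide_pos)
      moreover have "2 * (h (r/2) / 6) = p" unfolding p_def by simp
      ultimately show ?thesis by simp
    qed
    have m1: "\<eta> * (phi X - phi u) \<le> ln 2"
      using mult_left_mono[OF pdX, of \<eta>] \<eta>pos \<eta>eq by simp
    have m2: "\<eta> * (phi X2 - phi u) \<le> ln 2"
      using mult_left_mono[OF pdX2, of \<eta>] \<eta>pos \<eta>eq by simp
    have i1: "exp (- \<eta> * phi u) \<le> exp (ln 2) * exp (- \<eta> * phi X)"
      by (rule exp_le_M) (use m1 in \<open>simp add: algebra_simps\<close>)
    have i2: "exp (- \<eta> * phi u) \<le> exp (ln 2) * exp (- \<eta> * phi X2)"
      by (rule exp_le_M) (use m2 in \<open>simp add: algebra_simps\<close>)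
    show "1/2 * g (2*r) \<le> g (2 * (h (r/2) / 6)) \<and> g (2*r) \<le> 2 * g (2 * (h (r/2) / 3))"
      unfolding g2r gp g2p using i1 i2 by simp
  qed
  define M where "M = exp (\<eta> * ln 2)"
  have dbl: "\<And>\<rho>. 0 < \<rho> \<Longrightarrow> \<rho> < R \<Longrightarrow> g (2 * (2 * \<rho>)) \<le> M * g (2 * \<rho>)"
  proof -
    fix \<rho> :: real assume \<rho>: "0 < \<rho>" "\<rho> < R"
    have "ln \<rho> < ln (exp (-4))" using \<rho> R(3) e4
      by (subst ln_less_cancel_iff) auto
    then have l4: "- ln \<rho> > 4" by simp
    define y where "y = - ln \<rho> - ln 2"
    define x where "x = - ln \<rho>"
    have y0: "0 \<le> y" unfolding y_def using l4 l2le by linarith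
    have yx: "y \<le> x" "x - y = ln 2" unfolding x_def y_def using l2 by auto
    have ly: "1 \<le> ln (y + ln 2)" unfolding y_def using l4 by (intro ln_ge1) simp
    have "phi x - phi y \<le> (x - y) / ln (y + ln 2)" using y0 yx ly by (intro phi_upper_diff) auto
    also have "\<dots> \<le> ln 2" unfolding yx(2) using ly l2 by (simp add: divide_le_eq mult_le_cancel_left1)
    finally have pd: "phi x - phi y \<le> ln 2" .
    have m: "\<eta> * (phi x - phi y) \<le> \<eta> * ln 2" using mult_left_mono[OF pd, of \<eta>] \<eta>pos by simp
    have g4: "g (2 * (2 * \<rho>)) = exp (- \<eta> * phi y)"
    proof -
      have "g (2 * (2 * \<rho>)) = exp (- \<eta> * phi (ln (2 / (2 * (2 * \<rho>)))))" using G(3)[of "2*(2*\<rho>)"] \<rho> R by auto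
      moreover have "ln (2 / (2 * (2 * \<rho>))) = y" unfolding y_def using \<rho>
        by (simp add: ln_divide_pos ln_mult_pos)
      ultimately show ?thesis by simp
    qed
    have g2: "g (2 * \<rho>) = exp (- \<eta> * phi x)"
    proof -
      have "g (2 * \<rho>) = exp (- \<eta> * phi (ln (2 / (2 * \<rho>))))" using G(3)[of "2*\<rho>"] \<rho> R by auto
      moreover have "ln (2 / (2 * \<rho>)) = x" unfolding x_def using \<rho> by (simp add: ln_divide_pos)
      ultimately show ?thesis by simp
    qed
    show "g (2 * (2 * \<rho>)) \<le> M * g (2 * \<rho>)" unfolding g4 g2 M_def
      by (rule exp_le_M) (use m in \<open>simp add: algebra_simps\<close>)
  qed
  have c3: "\<And>r. 0 < r \<Longrightarrow> r < R \<Longrightarrow> 1/2 * g (2*r) \<le> g (2 * (h (r/2) / 6))" using cc by blast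
  have c4: "\<And>r. 0 < r \<Longrightarrow> r < R \<Longrightarrow> g (2*r) \<le> 2 * g (2 * (h (r/2) / 3))" using cc by blast
  have M1: "(1::real) \<le> M" unfolding M_def using \<eta>pos l2 by simp
  define A where "A = 1/2 / M"
  have Apos: "A > 0" unfolding A_def using M1 by simp
  have bound: "\<forall>a\<in>E. \<forall>r\<in>{0<..<R}. hausdorff_content g (E \<inter> cball a r) \<ge> ennreal (A * g (2 * r))"
  proof (intro ballI)
    fix a r assume a: "a \<in> E" and r: "r \<in> {0<..<R}"
    show "hausdorff_content g (E \<inter> cball a r) \<ge> ennreal (A * g (2 * r))"
      unfolding A_def
    proof (rule forward[OF closedE perf hpos G(5) G(4) c3 c4 dbl _ _ M1 a])
      show "0 < r" "r < R" using r by auto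
    qed simp_all
  qed
  have form: "\<forall>t\<in>{0<..<2*R}. g t = exp (- \<eta> * ln (2 / t) / ln (ln (4 / t)))"
  proof
    fix t assume t: "t \<in> {0<..<2*R}"
    then have "t \<le> 2 * exp (-4)" using R(3) e4 by auto
    then show "g t = exp (- \<eta> * ln (2 / t) / ln (ln (4 / t)))" using G(2) t by auto
  qed
  show ?thesis using Apos R(1) \<eta>pos G(1) form bound by blast
qed

lemma gphi_gen2: "0 < m \<Longrightarrow> exp (- \<eta> * ln (2 / m) / ln (ln (4 / m))) = exp (- \<eta> * phi (ln (2 / m)))"
  unfolding phi_def by (simp add: ln4)

lemma exp2_le16: "exp (2::real) \<le> 16"
proof -
  have "exp (2::real) = exp 1 * exp 1" by (simp add: exp_add[symmetric])
  also have "\<dots> \<le> 4 * 4" using exp1_le4 by (intro mult_mono) auto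
  finally show ?thesis by simp
qed

lemma part2_bwd:
  fixes E :: "complex set"
  assumes closedE: "closed E" and A: "A > 0" and r0: "r0 > 0" and \<eta>: "\<eta> > 0"
    and gg: "gauge_fun g" and form: "\<forall>t\<in>{0<..<2*r0}. g t = exp (- \<eta> * ln (2 / t) / ln (ln (4 / t)))"
    and bound: "\<forall>a\<in>E. \<forall>r\<in>{0<..<r0}. hausdorff_content g (E \<inter> cball a r) \<ge> ennreal (A * g (2 * r))"
  shows "\<exists>\<beta>>0. condU2 \<beta> E"
proof -
  have l2: "0 < ln (2::real)" by (rule ln_gt_zero) simp
  have l2le: "ln (2::real) \<le> 1" using ln_le_minus_one[of 2] by simp
  have gpos: "\<And>t. t > 0 \<Longrightarrow> 0 < g t" using gg unfolding gauge_fun_def by auto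
  have glim: "(g \<longlongrightarrow> 0) (at_right 0)" using gg unfolding gauge_fun_def by auto
  define \<beta> where "\<beta> = 4 * (\<bar>ln A\<bar> + 1) / \<eta>"
  have \<beta>pos: "\<beta> > 0" unfolding \<beta>_def using \<eta> by (intro divide_pos_pos) auto
  have \<eta>\<beta>: "\<eta> * \<beta> / 4 = \<bar>ln A\<bar> + 1" unfolding \<beta>_def using \<eta> by simp
  define K where "K = 16 * \<beta>^2 + 16"
  define r1 where "r1 = min r0 (exp (-K))"
  have r1: "r1 > 0" "r1 \<le> r0" "r1 \<le> exp (-K)" unfolding r1_def using r0 by auto
  have K16: "K \<ge> 16" unfolding K_def by simp
  have eK: "exp (-K) \<le> exp (-1)" using K16 by simp
  have e1: "exp (-1::real) < 1" by simp
  have r1lt: "r1 < 1" using r1(3) eK e1 by linarith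
  have lnbig: "\<And>r. 0 < r \<Longrightarrow> r < r1 \<Longrightarrow> - ln r \<ge> K"
  proof -
    fix r :: real assume r: "0 < r" "r < r1"
    have "ln r \<le> ln (exp (-K))" using r r1 by (subst ln_le_cancel_iff) auto
    then show "- ln r \<ge> K" by simp
  qed
  have key: "\<And>r. 0 < r \<Longrightarrow> r < r1 \<Longrightarrow> g (2 * (r * ln (1 / r) powr (-\<beta>))) < A * g (2 * r)"
  proof -
    fix r :: real assume r: "0 < r" "r < r1"
    define L where "L = - ln r"
    have LK: "L \<ge> K" unfolding L_def using lnbig r by simp
    have L16: "L \<ge> 16" using LK K16 by simp
    have lnL: "ln (1 / r) = L" unfolding L_def using r by (simp add: ln_divide_pos)
    have Lpos: "L > 0" using L16 by simp
    have lnL0: "ln L > 0" using L16 by (intro ln_gt_zero) simp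
    define s where "s = r * L powr (-\<beta>)"
    have Lpw: "L powr (-\<beta>) \<le> 1" using powr_mono2'[of "-\<beta>" 1 L] L16 \<beta>pos by simp
    have Lpw0: "0 < L powr (-\<beta>)" using Lpos by simp
    have spos: "0 < s" unfolding s_def using r Lpw0 by simp
    have sle: "s \<le> r" unfolding s_def using r Lpw Lpw0 by (simp add: mult_le_cancel_left1)
    have ls: "ln (1 / s) = L + \<beta> * ln L"
    proof -
      have "ln (1 / s) = - ln s" using spos by (simp add: ln_divide_pos)
      also have "ln s = ln r + ln (L powr (-\<beta>))" unfolding s_def using r Lpw0 by (intro ln_mult_pos) auto
      finally show ?thesis unfolding L_def by simp
    qed
    have g2r: "g (2 * r) = exp (- \<eta> * phi L)"
    proof -
      have "g (2 * r) = exp (- \<eta> * ln (2 / (2 * r)) / ln (ln (4 / (2 * r))))" using form r r1 by auto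
      also have "\<dots> = exp (- \<eta> * phi (ln (2 / (2 * r))))" using r by (intro gphi_gen2) simp
      also have "ln (2 / (2 * r)) = L" using lnL by simp
      finally show ?thesis .
    qed
    have g2s: "g (2 * s) = exp (- \<eta> * phi (L + \<beta> * ln L))"
    proof -
      have "g (2 * s) = exp (- \<eta> * ln (2 / (2 * s)) / ln (ln (4 / (2 * s))))" using form spos sle r r1 by auto
      also have "\<dots> = exp (- \<eta> * phi (ln (2 / (2 * s))))" using spos by (intro gphi_gen2) simp
      also have "ln (2 / (2 * s)) = L + \<beta> * ln L" using ls by simp
      finally show ?thesis .
    qed
    define w where "w = L powr (1/2)"
    have ww: "w * w = L" unfolding w_def using Lpos by (simp add: powr_add[symmetric])
    have w0: "w > 0" unfolding w_def using Lpos by simp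
    have w4: "w \<ge> 4 * \<beta>"
    proof (rule ccontr)
      assume "\<not> w \<ge> 4 * \<beta>"
      then have "w < 4 * \<beta>" by simp
      then have "w * w < (4 * \<beta>) * (4 * \<beta>)" using w0 by (intro mult_strict_mono) auto
      then have "L < 16 * \<beta>^2" using ww by (simp add: power2_eq_square)
      then show False using LK unfolding K_def by simp
    qed
    have lnw: "ln L \<le> 2 * w"
    proof -
      have "ln L \<le> L powr (1/2) / (1/2)" using L16 by (intro ln_powr_bound) auto
      then show ?thesis unfolding w_def by simp
    qed
    have bl: "\<beta> * ln L \<le> L / 2"
    proof -
      have "\<beta> * ln L \<le> \<beta> * (2 * w)" using lnw \<beta>pos by (intro mult_left_mono) auto
      also have "\<dots> = (2 * \<beta>) * w" by simp
      also have "\<dots> \<le> (w / 2) * w" using w4 w0 by (intro mult_right_mono) auto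
      also have "\<dots> = L / 2" using ww by simp
      finally show ?thesis .
    qed
    have xle: "L + \<beta> * ln L + ln 2 \<le> 2 * L" using bl l2le L16 by linarith
    have lx: "ln (L + \<beta> * ln L + ln 2) \<le> 2 * ln L"
    proof -
      have pos: "0 < L + \<beta> * ln L + ln 2" using Lpos lnL0 \<beta>pos l2 by (smt (verit) mult_pos_pos)
      have "ln (L + \<beta> * ln L + ln 2) \<le> ln (2 * L)" using xle pos by (subst ln_le_cancel_iff) auto
      also have "\<dots> = ln 2 + ln L" using Lpos by (intro ln_mult_pos) auto
      also have "ln 2 \<le> ln L" using L16 by (subst ln_le_cancel_iff) auto
      finally show ?thesis by simp
    qed
    have y2: "2 \<le> ln (L + ln 2)"
    proof -
      have "exp 2 \<le> L + ln 2" using exp2_le16 L16 l2 by linarith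
      moreover have "0 < L + ln 2" using l2 L16 by linarith
      ultimately have "ln (exp 2) \<le> ln (L + ln 2)" by (subst ln_le_cancel_iff) auto
      then show ?thesis by simp
    qed
    have bL0: "0 \<le> \<beta> * ln L" using \<beta>pos lnL0 by simp
    have pl: "(L + \<beta> * ln L - L) / (2 * ln (L + \<beta> * ln L + ln 2)) \<le> phi (L + \<beta> * ln L) - phi L"
      using Lpos bL0 y2 by (intro phi_lower_diff) auto
    have lxpos: "0 < ln (L + \<beta> * ln L + ln 2)"
    proof -
      have p1: "0 < L + ln 2" using Lpos l2 by linarith
      have p2: "0 < L + \<beta> * ln L + ln 2" using bL0 Lpos l2 by linarith
      have "ln (L + ln 2) \<le> ln (L + \<beta> * ln L + ln 2)" using bL0 p1 p2 by (subst ln_le_cancel_iff) auto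
      then show ?thesis using y2 by linarith
    qed
    have "\<beta> / 4 = (\<beta> * ln L) / (4 * ln L)" using lnL0 by simp
    also have "\<dots> \<le> (\<beta> * ln L) / (2 * ln (L + \<beta> * ln L + ln 2))"
      using lx lxpos bL0 by (intro divide_left_mono) auto
    also have "\<dots> = (L + \<beta> * ln L - L) / (2 * ln (L + \<beta> * ln L + ln 2))" by simp
    finally have pd: "\<beta> / 4 \<le> phi (L + \<beta> * ln L) - phi L" using pl by linarith
    have "\<eta> * (\<beta> / 4) \<le> \<eta> * (phi (L + \<beta> * ln L) - phi L)" using pd \<eta> by (intro mult_left_mono) auto
    then have q1: "\<eta> * (\<beta> / 4) \<le> \<eta> * phi (L + \<beta> * ln L) - \<eta> * phi L" by (simp add: right_diff_distrib)
    have q2: "\<eta> * (\<beta> / 4) = \<bar>ln A\<bar> + 1" using \<eta>\<beta> by simp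
    have ex: "- \<eta> * phi (L + \<beta> * ln L) \<le> - (\<bar>ln A\<bar> + 1) + - \<eta> * phi L"
      using q1 q2 by linarith
    have "g (2 * s) \<le> exp (- (\<bar>ln A\<bar> + 1)) * g (2 * r)"
      unfolding g2s g2r by (rule exp_le_M) (use ex in simp)
    also have "\<dots> < A * g (2 * r)"
    proof (rule mult_strict_right_mono)
      have "- (\<bar>ln A\<bar> + 1) < ln A" by simp
      then have "exp (- (\<bar>ln A\<bar> + 1)) < exp (ln A)" by simp
      then show "exp (- (\<bar>ln A\<bar> + 1)) < A" using A by simp
      show "0 < g (2 * r)" using gpos r by simp
    qed
    finally show "g (2 * (r * ln (1 / r) powr (-\<beta>))) < A * g (2 * r)" unfolding s_def lnL .
  qed
  have hU: "h_uniformly_perfect (\<lambda>r. 1 * h2 \<beta> r) r1 E"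
    unfolding h_uniformly_perfect_def
  proof (intro conjI ballI)
    show "closed E" by fact
    have hm: "\<And>x y. 0 \<le> x \<Longrightarrow> x \<le> y \<Longrightarrow> y < r1 \<Longrightarrow> h2 \<beta> x \<le> h2 \<beta> y"
    proof -
      fix x y :: real assume xy: "0 \<le> x" "x \<le> y" "y < r1"
      show "h2 \<beta> x \<le> h2 \<beta> y"
      proof (cases "x = 0")
        case True
        then show ?thesis unfolding h2_def using xy by simp
      next
        case False
        then have x0: "0 < x" using xy by simp
        have y1: "1 < 1 / y" using xy x0 r1lt by (simp add: field_simps)
        have ly: "0 < ln (1 / y)" using y1 by (rule ln_gt_zero)
        have "1 / y \<le> 1 / x" using x0 xy by (intro divide_left_mono) auto
        then have lxy: "ln (1 / y) \<le> ln (1 / x)" using x0 y1 xy by (subst ln_le_cancel_iff) auto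
        have "ln (1 / x) powr (-\<beta>) \<le> ln (1 / y) powr (-\<beta>)" using ly lxy \<beta>pos by (intro powr_mono2') auto
        then show ?thesis unfolding h2_def using xy x0 by (intro mult_mono) auto
      qed
    qed
    show "mono_on {0..<r1} (\<lambda>r. 1 * h2 \<beta> r)"
      by (intro mono_onI) (use hm in auto)
    fix r assume r: "r \<in> {0..<r1}"
    show "1 * h2 \<beta> r \<le> r"
    proof (cases "r = 0")
      case True then show ?thesis unfolding h2_def by simp
    next
      case False
      then have r0': "0 < r" "r < r1" using r by auto
      have "- ln r \<ge> K" using lnbig r0' by simp
      then have l1: "1 \<le> ln (1 / r)" using K16 r0' by (simp add: ln_divide_pos)
      have "ln (1 / r) powr (-\<beta>) \<le> 1" using powr_mono2'[of "-\<beta>" 1 "ln (1 / r)"] l1 \<beta>pos by simp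
      then show ?thesis unfolding h2_def using r0' by (simp add: mult_le_cancel_left1)
    qed
  next
    fix a r assume a: "a \<in> E" and r: "r \<in> {0<..<r1}"
    show "{z. 1 * h2 \<beta> r \<le> cmod (z - a) \<and> cmod (z - a) \<le> r} \<inter> E \<noteq> {}"
    proof
      assume emp: "{z. 1 * h2 \<beta> r \<le> cmod (z - a) \<and> cmod (z - a) \<le> r} \<inter> E = {}"
      have sub: "E \<inter> cball a r \<subseteq> cball a (r * ln (1 / r) powr (-\<beta>))"
        using annulus_sub[OF emp] unfolding h2_def by simp
      have b: "ennreal (A * g (2 * r)) \<le> hausdorff_content g (E \<inter> cball a r)"
        using bound a r r1 by auto
      have rr: "0 < r" "r < r1" using r by auto
      have "1 < 1 / r" using rr r1lt by (simp add: field_simps)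
      then have "0 < ln (1 / r)" by (rule ln_gt_zero)
      then have spos: "0 < r * ln (1 / r) powr (-\<beta>)" using rr by simp
      have "A * g (2 * r) \<le> g (2 * (r * ln (1 / r) powr (-\<beta>)))"
        by (rule bwd_step[OF gpos glim b spos sub])
      then show False using key[OF rr] by simp
    qed
  qed
  have "\<exists>C>0. \<exists>r0>0. h_uniformly_perfect (\<lambda>r. C * h2 \<beta> r) r0 E"
  proof -
    have "0 < (1::real) \<and> (\<exists>r0>0. h_uniformly_perfect (\<lambda>r. 1 * h2 \<beta> r) r0 E)" using hU r1(1) by (auto intro!: exI[of _ r1])
    then show ?thesis by blast
  qed
  then show ?thesis unfolding condU2_def using \<beta>pos by blast
qed

theorem theorem1p4:
  fixes E :: "complex set"
  assumes "closed E"
  shows "((\<exists>\<alpha>>1. condU1 \<alpha> E) \<longleftrightarrow>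
           (\<exists>A>0. \<exists>C>0. \<exists>r0>0. \<exists>\<gamma>>0. \<exists>g. gauge_fun g \<and>
              (\<forall>t\<in>{0<..<2*r0}. g t = (ln (1 / (C * t))) powr (- \<gamma>)) \<and>
              (\<forall>a\<in>E. \<forall>r\<in>{0<..<r0}.
                 hausdorff_content g (E \<inter> cball a r) \<ge> ennreal (A * g (2 * r)))))
       \<and> ((\<exists>\<beta>>0. condU2 \<beta> E) \<longleftrightarrow>
           (\<exists>A>0. \<exists>r0>0. \<exists>\<eta>>0. \<exists>g. gauge_fun g \<and>
              (\<forall>t\<in>{0<..<2*r0}. g t = exp (- \<eta> * ln (2 / t) / ln (ln (4 / t)))) \<and>
              (\<forall>a\<in>E. \<forall>r\<in>{0<..<r0}.
                 hausdorff_content g (E \<inter> cball a r) \<ge> ennreal (A * g (2 * r)))))"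
proof -
  have p1: "(\<exists>\<alpha>>1. condU1 \<alpha> E) \<longleftrightarrow>
           (\<exists>A>0. \<exists>C>0. \<exists>r0>0. \<exists>\<gamma>>0. \<exists>g. gauge_fun g \<and>
              (\<forall>t\<in>{0<..<2*r0}. g t = (ln (1 / (C * t))) powr (- \<gamma>)) \<and>
              (\<forall>a\<in>E. \<forall>r\<in>{0<..<r0}.
                 hausdorff_content g (E \<inter> cball a r) \<ge> ennreal (A * g (2 * r))))"
  proof
    assume "\<exists>\<alpha>>1. condU1 \<alpha> E"
    then obtain \<alpha> C0 r0 where "\<alpha> > 1" "C0 > 0" "r0 > 0" "h_uniformly_perfect (\<lambda>r. C0 * h1 \<alpha> r) r0 E"
      unfolding condU1_def by blast
    then show "\<exists>A>0. \<exists>C>0. \<exists>r0>0. \<exists>\<gamma>>0. \<exists>g. gauge_fun g \<and>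
              (\<forall>t\<in>{0<..<2*r0}. g t = (ln (1 / (C * t))) powr (- \<gamma>)) \<and>
              (\<forall>a\<in>E. \<forall>r\<in>{0<..<r0}.
                 hausdorff_content g (E \<inter> cball a r) \<ge> ennreal (A * g (2 * r)))"
      by (rule part1_fwd[OF assms])
  next
    assume "\<exists>A>0. \<exists>C>0. \<exists>r0>0. \<exists>\<gamma>>0. \<exists>g. gauge_fun g \<and>
              (\<forall>t\<in>{0<..<2*r0}. g t = (ln (1 / (C * t))) powr (- \<gamma>)) \<and>
              (\<forall>a\<in>E. \<forall>r\<in>{0<..<r0}.
                 hausdorff_content g (E \<inter> cball a r) \<ge> ennreal (A * g (2 * r)))"
    then obtain A C r0 \<gamma> g where "A > 0" "C > 0" "r0 > 0" "\<gamma> > 0" "gauge_fun g"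
      "\<forall>t\<in>{0<..<2*r0}. g t = (ln (1 / (C * t))) powr (- \<gamma>)"
      "\<forall>a\<in>E. \<forall>r\<in>{0<..<r0}. hausdorff_content g (E \<inter> cball a r) \<ge> ennreal (A * g (2 * r))"
      by blast
    then show "\<exists>\<alpha>>1. condU1 \<alpha> E" by (rule part1_bwd[OF assms])
  qed
  have p2: "(\<exists>\<beta>>0. condU2 \<beta> E) \<longleftrightarrow>
           (\<exists>A>0. \<exists>r0>0. \<exists>\<eta>>0. \<exists>g. gauge_fun g \<and>
              (\<forall>t\<in>{0<..<2*r0}. g t = exp (- \<eta> * ln (2 / t) / ln (ln (4 / t)))) \<and>
              (\<forall>a\<in>E. \<forall>r\<in>{0<..<r0}.
                 hausdorff_content g (E \<inter> cball a r) \<ge> ennreal (A * g (2 * r))))"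
  proof
    assume "\<exists>\<beta>>0. condU2 \<beta> E"
    then obtain \<beta> C0 r0 where "\<beta> > 0" "C0 > 0" "r0 > 0" "h_uniformly_perfect (\<lambda>r. C0 * h2 \<beta> r) r0 E"
      unfolding condU2_def by blast
    then show "\<exists>A>0. \<exists>r0>0. \<exists>\<eta>>0. \<exists>g. gauge_fun g \<and>
              (\<forall>t\<in>{0<..<2*r0}. g t = exp (- \<eta> * ln (2 / t) / ln (ln (4 / t)))) \<and>
              (\<forall>a\<in>E. \<forall>r\<in>{0<..<r0}.
                 hausdorff_content g (E \<inter> cball a r) \<ge> ennreal (A * g (2 * r)))"
      by (rule part2_fwd[OF assms])
  next
    assume "\<exists>A>0. \<exists>r0>0. \<exists>\<eta>>0. \<exists>g. gauge_fun g \<and>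
              (\<forall>t\<in>{0<..<2*r0}. g t = exp (- \<eta> * ln (2 / t) / ln (ln (4 / t)))) \<and>
              (\<forall>a\<in>E. \<forall>r\<in>{0<..<r0}.
                 hausdorff_content g (E \<inter> cball a r) \<ge> ennreal (A * g (2 * r)))"
    then obtain A r0 \<eta> g where "A > 0" "r0 > 0" "\<eta> > 0" "gauge_fun g"
      "\<forall>t\<in>{0<..<2*r0}. g t = exp (- \<eta> * ln (2 / t) / ln (ln (4 / t)))"
      "\<forall>a\<in>E. \<forall>r\<in>{0<..<r0}. hausdorff_content g (E \<inter> cball a r) \<ge> ennreal (A * g (2 * r))"
      by blast
    then show "\<exists>\<beta>>0. condU2 \<beta> E" by (rule part2_bwd[OF assms])
  qed
  show ?thesis using p1 p2 by blast
qed

end
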